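(* Let $d=1$, the walk be nearest-neighbor, and assume $\int|\log\pi(0,\pm1)|^{1+\alpha}\,\mathrm{d}\mathbb{P}<\infty$ for some $\alpha>0$. Then there exist $\xi_c,\xi_c'\in\mathbb{R}$ with $-1<\xi_c'\le0\le\xi_c<1$ such that for every $\xi\in(-1,\xi_c')\cup(\xi_c,1)$ there exists $\mu_\xi\in A_\xi\cap M_{1,s}^{\ll}(\Omega\times U)$ with $\mathrm{d}\mu_\xi(\omega,z)=\mathrm{d}(\mu_\xi)^1(\omega)\,\pi(0,z)\,\mathrm{e}^{\theta z+F(\omega,z)+r}$ for some $\theta\in\mathbb{R}$, $F\in\mathcal{K}$ and $r\in\mathbb{R}$.
   Context: Setting: $d=1$, $U=\{-1,1\}$. An environment is $\omega=(\omega_x)_{x\in\mathbb{Z}}$ with $\omega_x=(\pi(x,x+1),\pi(x,x-1))$ a probability vector; $\Omega$ is the space of environments (product topology, Borel $\sigma$-algebra), $(T_z\omega)_x=\omega_{x+z}$, and $\mathbb{P}$ is a probability measure on $\Omega$ stationary and ergodic under the shifts. For $\mu\in M_1(\Omega\times U)$, $\mathrm{d}(\mu)^1(\omega):=\sum_{z\in U}\mathrm{d}\mu(\omega,z)$, $\mathrm{d}(\mu)^2(\omega):=\sum_{z\in U}\mathrm{d}\mu(T_{-z}\omega,z)$; $M_{1,s}^{\ll}(\Omega\times U)$ is the set of $\mu$ with $(\mu)^1=(\mu)^2\ll\mathbb{P}$ and $\frac{\mathrm{d}\mu(\cdot,z)}{\mathrm{d}(\mu)^1}>0$ $\mathbb{P}$-a.s.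 for $z=\pm1$. $A_\xi:=\{\mu\in M_1(\Omega\times U):\int\sum_{z}z\,\mathrm{d}\mu(\omega,z)=\xi\}$. The class $\mathcal{K}$ consists of measurable $F:\Omega\times U\to\mathbb{R}$ with $F(\cdot,z)\in L^{1+\alpha}(\mathbb{P})$ for some $\alpha>0$, $\mathbb{E}[F(\cdot,z)]=0$ for each $z$, and, for $\mathbb{P}$-a.e. $\omega$ and every sequence $(x_k)_{k=0}^n$ in $\mathbb{Z}$ with $x_0=x_n$ and $x_{k+1}-x_k\in U$, $\sum_{k=0}^{n-1}F(T_{x_k}\omega,x_{k+1}-x_k)=0$. *)

theory Defs
  imports "HOL-Probability.Probability"
begin

text \<open>Environments in dimension d = 1: omega x = (pi(x,x+1), pi(x,x-1)).\<close>
type_synonym env = "int \<Rightarrow> real \<times> real"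

definition U :: "int set" where "U = {-1, 1}"

definition is_env :: "env \<Rightarrow> bool" where
  "is_env \<omega> \<longleftrightarrow> (\<forall>x. fst (\<omega> x) \<ge> 0 \<and> snd (\<omega> x) \<ge> 0 \<and> fst (\<omega> x) + snd (\<omega> x) = 1)"

definition Omega :: "env measure" where
  "Omega = restrict_space (PiM UNIV (\<lambda>_. borel)) {\<omega>. is_env \<omega>}"

definition shift :: "int \<Rightarrow> env \<Rightarrow> env" where
  "shift z \<omega> = (\<lambda>x. \<omega> (x + z))"

definition pi0 :: "env \<Rightarrow> int \<Rightarrow> real" where
  "pi0 \<omega> z = (if z = 1 then fst (\<omega> 0) else snd (\<omega> 0))"

definition stationary_ergodic :: "env measure \<Rightarrow> bool" where
  "stationary_ergodic P \<longleftrightarrow>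
     prob_space P \<and> sets P = sets Omega \<and>
     (\<forall>z. distr P P (shift z) = P) \<and>
     (\<forall>A \<in> sets P. (\<forall>z. shift z -` A \<inter> space P = A) \<longrightarrow>
        measure P A = 0 \<or> measure P A = 1)"

definition OmegaU :: "(env \<times> int) measure" where
  "OmegaU = Omega \<Otimes>\<^sub>M count_space U"

definition M1 :: "(env \<times> int) measure set" where
  "M1 = {\<mu>. prob_space \<mu> \<and> sets \<mu> = sets OmegaU}"

definition marg1 :: "(env \<times> int) measure \<Rightarrow> env measure" where
  "marg1 \<mu> = distr \<mu> Omega fst"

definition marg2 :: "(env \<times> int) measure \<Rightarrow> env measure" where
  "marg2 \<mu> = distr \<mu> Omega (\<lambda>(\<eta>, z). shift z \<eta>)"

text \<open>M_{1,s}^{<<}(Omega x U) relative to P.  The density condition is read as: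
  there is a version g(.,z) of d mu(.,z) / d (mu)^1 which is positive P-a.s.\<close>
definition M1s_ac :: "env measure \<Rightarrow> (env \<times> int) measure set" where
  "M1s_ac P = {\<mu>. \<mu> \<in> M1 \<and> marg1 \<mu> = marg2 \<mu> \<and> absolutely_continuous P (marg1 \<mu>) \<and>
      (\<exists>g :: int \<Rightarrow> env \<Rightarrow> real. \<forall>z \<in> U.
          g z \<in> borel_measurable Omega \<and> (AE \<omega> in P. g z \<omega> > 0) \<and>
          (\<forall>A \<in> sets Omega. emeasure \<mu> (A \<times> {z}) =
                 (\<integral>\<^sup>+ \<omega>. ennreal (g z \<omega>) * indicator A \<omega> \<partial>(marg1 \<mu>))))}"

definition A_xi :: "real \<Rightarrow> (env \<times> int) measure set" where
  "A_xi \<xi> = {\<mu>. \<mu> \<in> M1 \<and> (\<integral>p. real_of_int (snd p) \<partial>\<mu>) = \<xi>}"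

definition classK :: "env measure \<Rightarrow> (env \<Rightarrow> int \<Rightarrow> real) set" where
  "classK P = {F. (\<forall>z \<in> U. (\<lambda>\<omega>. F \<omega> z) \<in> borel_measurable Omega) \<and>
      (\<exists>\<alpha> > 0. \<forall>z \<in> U. integrable P (\<lambda>\<omega>. \<bar>F \<omega> z\<bar> powr (1 + \<alpha>))) \<and>
      (\<forall>z \<in> U. (\<integral>\<omega>. F \<omega> z \<partial>P) = 0) \<and>
      (AE \<omega> in P. \<forall>(n::nat) (xs :: nat \<Rightarrow> int). xs 0 = xs n \<and> (\<forall>k < n. xs (Suc k) - xs k \<in> U)
          \<longrightarrow> (\<Sum>k<n. F (shift (xs k) \<omega>) (xs (Suc k) - xs k)) = 0)}"

end

theory Submission
  imports Defs
begin


lemma shift_shift: "shift a (shift b \<omega>) = shift (a + b) \<omega>"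
  unfolding shift_def by (simp add: ac_simps)
lemma shift_0[simp]: "shift 0 \<omega> = \<omega>" unfolding shift_def by simp
lemma shift_apply: "shift z \<omega> x = \<omega> (x + z)" unfolding shift_def by simp
lemma space_Omega: "space Omega = {\<omega>. is_env \<omega>}"
  unfolding Omega_def by (simp add: space_restrict_space space_PiM)
lemma is_env_shift: "is_env \<omega> \<Longrightarrow> is_env (shift z \<omega>)"
  unfolding is_env_def shift_def by auto

lemma meas_coord[measurable]: "(\<lambda>\<omega>. \<omega> x) \<in> Omega \<rightarrow>\<^sub>M borel"
  unfolding Omega_def
  by (rule measurable_restrict_space1) (rule measurable_component_singleton, simp)

lemma meas_shift[measurable]: "shift z \<in> Omega \<rightarrow>\<^sub>M Omega"
proof -
  have "shift z \<in> Omega \<rightarrow>\<^sub>M PiM UNIV (\<lambda>_. borel)"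
    unfolding shift_def
    by (rule measurable_PiM_single') (auto simp: space_PiM)
  then have "shift z \<in> Omega \<rightarrow>\<^sub>M restrict_space (PiM UNIV (\<lambda>_. borel)) {\<omega>. is_env \<omega>}"
    by (intro measurable_restrict_space2) (auto simp: space_Omega is_env_shift)
  then show ?thesis by (simp add: Omega_def)
qed

lemma meas_fst_borel[measurable]: "fst \<in> borel_measurable (borel :: (real \<times> real) measure)"
  by (intro borel_measurable_continuous_onI continuous_intros)
lemma meas_snd_borel[measurable]: "snd \<in> borel_measurable (borel :: (real \<times> real) measure)"
  by (intro borel_measurable_continuous_onI continuous_intros)
lemma meas_fst_coord[measurable]: "(\<lambda>\<omega>. fst (\<omega> x)) \<in> borel_measurable Omega"
  using measurable_comp[OF meas_coord meas_fst_borel] by (simp add: comp_def)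
lemma meas_snd_coord[measurable]: "(\<lambda>\<omega>. snd (\<omega> x)) \<in> borel_measurable Omega"
  using measurable_comp[OF meas_coord meas_snd_borel] by (simp add: comp_def)

lemma meas_pi0[measurable]: "(\<lambda>\<omega>. pi0 \<omega> z) \<in> borel_measurable Omega"
  unfolding pi0_def by (cases "z = 1") simp_all

lemma pi0_shift: "pi0 (shift k \<omega>) z = (if z = 1 then fst (\<omega> k) else snd (\<omega> k))"
  unfolding pi0_def shift_def by simp

lemma pi0_env: "is_env \<omega> \<Longrightarrow> 0 \<le> pi0 \<omega> z \<and> pi0 \<omega> z \<le> 1"
  unfolding is_env_def pi0_def by (smt (verit))

locale Pset =
  fixes P :: "env measure"
  assumes stat: "stationary_ergodic P"
begin

lemma prob: "prob_space P" using stat unfolding stationary_ergodic_def by blast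
lemma sets_P: "sets P = sets Omega" using stat unfolding stationary_ergodic_def by blast
lemma space_P: "space P = space Omega" using sets_eq_imp_space_eq[OF sets_P] .
lemma meas_P: "measurable P = measurable Omega" by (rule ext, rule measurable_cong_sets[OF sets_P refl])
lemma meas_P2: "measurable M P = measurable M Omega" by (rule measurable_cong_sets[OF refl sets_P])
lemma distr_P: "distr P P (shift z) = P" using stat unfolding stationary_ergodic_def by blast
lemma shift_PP: "shift z \<in> P \<rightarrow>\<^sub>M P" by (simp add: meas_P meas_P2)

lemma nn_shift:
  assumes "f \<in> borel_measurable Omega"
  shows "(\<integral>\<^sup>+\<omega>. f (shift z \<omega>) \<partial>P) = integral\<^sup>N P f"
proof -
  have "integral\<^sup>N (distr P P (shift z)) f = (\<integral>\<^sup>+\<omega>. f (shift z \<omega>) \<partial>P)"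
    by (rule nn_integral_distr[OF shift_PP]) (simp add: meas_P assms)
  then show ?thesis by (simp add: distr_P)
qed

lemma int_shift:
  assumes "f \<in> borel_measurable Omega"
  shows "(\<integral>\<omega>. f (shift z \<omega>) \<partial>P) = (integral\<^sup>L P f :: real)"
proof -
  have "integral\<^sup>L (distr P P (shift z)) f = (\<integral>\<omega>. f (shift z \<omega>) \<partial>P)"
    by (rule integral_distr[OF shift_PP]) (simp add: meas_P assms)
  then show ?thesis by (simp add: distr_P)
qed

lemma integrable_shift:
  assumes "integrable P (f :: env \<Rightarrow> real)"
  shows "integrable P (\<lambda>\<omega>. f (shift z \<omega>))"
proof -
  have m: "f \<in> borel_measurable P" using assms by blast
  have "integrable (distr P P (shift z)) f \<longleftrightarrow> integrable P (\<lambda>\<omega>. f (shift z \<omega>))"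
    by (rule integrable_distr_eq[OF shift_PP m])
  then show ?thesis using assms by (simp add: distr_P)
qed

lemma AE_shift:
  assumes "AE \<omega> in P. Q \<omega>"
  shows "AE \<omega> in P. Q (shift z \<omega>)"
proof -
  obtain N where N: "{x \<in> space P. \<not> Q x} \<subseteq> N" "emeasure P N = 0" "N \<in> sets P"
    using assms by (auto elim: AE_E)
  have "emeasure P (shift z -` N \<inter> space P) = emeasure (distr P P (shift z)) N"
    by (rule emeasure_distr[OF shift_PP N(3), symmetric])
  also have "\<dots> = 0" using N by (simp add: distr_P)
  finally have "emeasure P (shift z -` N \<inter> space P) = 0" .
  moreover have "shift z -` N \<inter> space P \<in> sets P"
    using shift_PP N(3) by (rule measurable_sets)
  moreover have "{x \<in> space P. \<not> Q (shift z x)} \<subseteq> shift z -` N \<inter> space P"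
    using N(1) measurable_space[OF shift_PP] by auto
  ultimately show ?thesis by (intro AE_I) 
qed

lemma AE_env: "AE \<omega> in P. is_env \<omega>"
  by (rule AE_I2) (simp add: space_P space_Omega)

end




definition rho :: "int \<Rightarrow> env \<Rightarrow> real" where
  "rho e \<omega> = max 0 (min 1 (pi0 \<omega> e * pi0 (shift e \<omega>) (-e)))"

fun qn :: "int \<Rightarrow> real \<Rightarrow> nat \<Rightarrow> env \<Rightarrow> real" where
  "qn e c 0 \<omega> = 1"
| "qn e c (Suc n) \<omega> = 1 - c * rho e (shift (-e) \<omega>) / qn e c n (shift (-e) \<omega>)"

definition qq :: "int \<Rightarrow> real \<Rightarrow> env \<Rightarrow> real" where
  "qq e c \<omega> = lim (\<lambda>n. qn e c n \<omega>)"

lemma rho_bnd: "0 \<le> rho e \<omega>" "rho e \<omega> \<le> 1" unfolding rho_def by auto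

lemma meas_rho[measurable]: "rho e \<in> borel_measurable Omega"
proof -
  have "(\<lambda>\<omega>. pi0 (shift e \<omega>) (-e)) \<in> borel_measurable Omega"
    using measurable_comp[OF meas_shift meas_pi0] by (simp add: comp_def)
  then show ?thesis unfolding rho_def[abs_def] by measurable
qed

context fixes e :: int and c :: real assumes c0: "0 \<le> c" and c1: "c \<le> 1/8"
begin

lemma qn_bnd: "3/4 \<le> qn e c n \<omega> \<and> qn e c n \<omega> \<le> 1"
proof (induction n arbitrary: \<omega>)
  case 0 then show ?case by simp
next
  case (Suc n)
  let ?a = "c * rho e (shift (-e) \<omega>)" and ?x = "qn e c n (shift (-e) \<omega>)"
  have x: "3/4 \<le> ?x" "?x \<le> 1" using Suc by auto
  have a: "0 \<le> ?a" "?a \<le> 1/8" using c0 c1 rho_bnd[of e "shift (-e) \<omega>"]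
    by (auto intro: mult_nonneg_nonneg) (smt (verit) mult_left_le mult_mono)
  have "?a / ?x \<le> (1/8) / (3/4)"
    using a x by (intro frac_le) auto
  moreover have "0 \<le> ?a / ?x" using a x by simp
  ultimately show ?case by simp
qed

lemma qn_pos: "0 < qn e c n \<omega>" using qn_bnd[of n \<omega>] by simp

lemma qn_dec: "qn e c (Suc n) \<omega> \<le> qn e c n \<omega>"
proof (induction n arbitrary: \<omega>)
  case 0
  have "0 \<le> c * rho e (shift (-e) \<omega>) / qn e c 0 (shift (-e) \<omega>)"
    using c0 rho_bnd by simp
  then show ?case by simp
next
  case (Suc n)
  let ?a = "c * rho e (shift (-e) \<omega>)"
  have a: "0 \<le> ?a" using c0 rho_bnd by simp
  have "?a / qn e c n (shift (-e) \<omega>) \<le> ?a / qn e c (Suc n) (shift (-e) \<omega>)"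
    using Suc[of "shift (-e) \<omega>"] a qn_pos[of "Suc n" "shift (-e) \<omega>"]
      qn_pos[of n "shift (-e) \<omega>"] by (intro divide_left_mono) auto
  moreover have "qn e c (Suc (Suc n)) \<omega> = 1 - ?a / qn e c (Suc n) (shift (-e) \<omega>)"
    by (simp only: qn.simps)
  moreover have "qn e c (Suc n) \<omega> = 1 - ?a / qn e c n (shift (-e) \<omega>)"
    by (simp only: qn.simps)
  ultimately show ?case by linarith
qed

lemma qn_lim: "(\<lambda>n. qn e c n \<omega>) \<longlonglongrightarrow> qq e c \<omega>"
proof -
  have "decseq (\<lambda>n. qn e c n \<omega>)" using qn_dec by (intro decseq_SucI) 
  moreover have "\<forall>n. 3/4 \<le> qn e c n \<omega>" using qn_bnd by blast
  ultimately obtain L where "(\<lambda>n. qn e c n \<omega>) \<longlonglongrightarrow> L"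
    by (rule decseq_convergent)
  then show ?thesis unfolding qq_def by (simp add: limI)
qed

lemma qq_bnd: "3/4 \<le> qq e c \<omega>" "qq e c \<omega> \<le> 1"
proof -
  show "3/4 \<le> qq e c \<omega>"
    by (rule LIMSEQ_le_const[OF qn_lim]) (use qn_bnd in blast)
  show "qq e c \<omega> \<le> 1"
    by (rule LIMSEQ_le_const2[OF qn_lim]) (use qn_bnd in blast)
qed

lemma qq_pos: "0 < qq e c \<omega>" using qq_bnd(1)[of \<omega>] by simp

lemma qq_fix: "qq e c \<omega> = 1 - c * rho e (shift (-e) \<omega>) / qq e c (shift (-e) \<omega>)"
proof -
  have "(\<lambda>n. qn e c (Suc n) \<omega>) \<longlonglongrightarrow> qq e c \<omega>"
    using qn_lim by (rule LIMSEQ_Suc)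
  moreover have "(\<lambda>n. qn e c (Suc n) \<omega>) \<longlonglongrightarrow> 1 - c * rho e (shift (-e) \<omega>) / qq e c (shift (-e) \<omega>)"
    unfolding qn.simps using qq_pos[of "shift (-e) \<omega>"]
    by (intro tendsto_intros qn_lim) auto
  ultimately show ?thesis by (rule LIMSEQ_unique)
qed

lemma qn_err: "0 \<le> qn e c n \<omega> - qq e c \<omega> \<and> qn e c n \<omega> - qq e c \<omega> \<le> (1/2)^n"
proof (induction n arbitrary: \<omega>)
  case 0 then show ?case using qq_bnd[of \<omega>] by simp
next
  case (Suc n)
  let ?a = "c * rho e (shift (-e) \<omega>)" and ?x = "qn e c n (shift (-e) \<omega>)"
    and ?y = "qq e c (shift (-e) \<omega>)"
  have a: "0 \<le> ?a" "?a \<le> 1/8" using c0 c1 rho_bnd[of e "shift (-e) \<omega>"]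
    by (auto intro: mult_nonneg_nonneg) (smt (verit) mult_left_le mult_mono)
  have x: "3/4 \<le> ?x" "3/4 \<le> ?y" using qn_bnd qq_bnd by auto
  have d: "0 \<le> ?x - ?y" "?x - ?y \<le> (1/2)^n" using Suc by auto
  have eq: "qn e c (Suc n) \<omega> - qq e c \<omega> = ?a * (?x - ?y) / (?x * ?y)"
    apply (subst qq_fix) using x by (simp add: field_simps)
  have "?a * (?x - ?y) / (?x * ?y) \<le> (1/8) * (?x - ?y) / (9/16)"
  proof (rule frac_le)
    show "0 \<le> 1 / 8 * (?x - ?y)" using d by simp
    show "?a * (?x - ?y) \<le> 1 / 8 * (?x - ?y)" using a d by (intro mult_right_mono) auto
    show "0 < (9/16::real)" by simp
    have "(3/4) * (3/4) \<le> ?x * ?y" using x by (intro mult_mono) auto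
    then show "9/16 \<le> ?x * ?y" by simp
  qed
  also have "\<dots> \<le> (1/2)^(Suc n)" using d by simp
  finally show ?case using eq a d x by simp
qed

lemma meas_qn[measurable]: "qn e c n \<in> borel_measurable Omega"
proof (induction n)
  case 0 then show ?case by simp
next
  case (Suc n)
  have "(\<lambda>\<omega>. rho e (shift (-e) \<omega>)) \<in> borel_measurable Omega"
    using measurable_comp[OF meas_shift meas_rho] by (simp add: comp_def)
  moreover have "(\<lambda>\<omega>. qn e c n (shift (-e) \<omega>)) \<in> borel_measurable Omega"
    using measurable_comp[OF meas_shift Suc] by (simp add: comp_def)
  ultimately show ?case by (simp only: qn.simps) measurable
qed

lemma meas_qq[measurable]: "qq e c \<in> borel_measurable Omega"
  by (rule borel_measurable_LIMSEQ_metric[OF meas_qn qn_lim])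

end

lemma qn_cont: "continuous_on {0..1/8} (\<lambda>c. qn e c n \<omega>)"
proof (induction n arbitrary: \<omega>)
  case 0 then show ?case by simp
next
  case (Suc n)
  have "\<forall>x\<in>{0..1/8}. qn e x n (shift (-e) \<omega>) \<noteq> 0"
    using qn_pos by (metis atLeastAtMost_iff less_irrefl)
  then show ?case unfolding qn.simps
    by (intro continuous_intros Suc) auto
qed

lemma qq_cont: "continuous_on {0..1/8} (\<lambda>c. qq e c \<omega>)"
proof (rule uniform_limit_theorem[where f = "\<lambda>n c. qn e c n \<omega>" and F = sequentially])
  show "\<forall>\<^sub>F n in sequentially. continuous_on {0..1/8} (\<lambda>c. qn e c n \<omega>)"
    by (simp add: qn_cont)
  show "uniform_limit {0..1/8} (\<lambda>n c. qn e c n \<omega>) (\<lambda>c. qq e c \<omega>) sequentially"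
  proof (rule uniform_limitI)
    fix \<epsilon> :: real assume "0 < \<epsilon>"
    then obtain N where N: "(1/2::real)^N < \<epsilon>"
      using real_arch_pow_inv[of \<epsilon> "1/2"] by auto
    show "\<forall>\<^sub>F n in sequentially. \<forall>c\<in>{0..1/8}. dist (qn e c n \<omega>) (qq e c \<omega>) < \<epsilon>"
    proof (rule eventually_sequentiallyI[of N])
      fix n assume "N \<le> n"
      then have "(1/2::real)^n \<le> (1/2)^N" by (intro power_decreasing) auto
      show "\<forall>c\<in>{0..1/8}. dist (qn e c n \<omega>) (qq e c \<omega>) < \<epsilon>"
      proof
        fix c :: real assume "c \<in> {0..1/8}"
        then have "0 \<le> qn e c n \<omega> - qq e c \<omega> \<and> qn e c n \<omega> - qq e c \<omega> \<le> (1/2)^n"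
          by (intro qn_err) auto
        with N \<open>(1/2::real)^n \<le> (1/2)^N\<close> have "\<bar>qn e c n \<omega> - qq e c \<omega>\<bar> < \<epsilon>"
          by linarith
        then show "dist (qn e c n \<omega>) (qq e c \<omega>) < \<epsilon>"
          by (simp add: dist_real_def)
      qed
    qed
  qed
qed simp




definition sig :: "int \<Rightarrow> real \<Rightarrow> env \<Rightarrow> real" where
  "sig e c \<omega> = (1 - qq e c \<omega>) / qq e c \<omega>"

fun pp :: "int \<Rightarrow> real \<Rightarrow> nat \<Rightarrow> env \<Rightarrow> real" where
  "pp e c 0 \<omega> = 1"
| "pp e c (Suc k) \<omega> = sig e c (shift e \<omega>) * pp e c k (shift e \<omega>)"

definition SS :: "int \<Rightarrow> real \<Rightarrow> env \<Rightarrow> real" where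
  "SS e c \<omega> = (\<Sum>k. pp e c k \<omega>)"

definition hh :: "int \<Rightarrow> real \<Rightarrow> env \<Rightarrow> real" where
  "hh e c \<omega> = SS e c \<omega> / qq e c \<omega>"

context fixes e :: int and c :: real assumes c0: "0 \<le> c" and c1: "c \<le> 1/8"
begin

lemma sig_bnd: "0 \<le> sig e c \<omega> \<and> sig e c \<omega> \<le> 1/3"
proof -
  have q: "3/4 \<le> qq e c \<omega>" "qq e c \<omega> \<le> 1" using qq_bnd[OF c0 c1] by auto
  have "(1 - qq e c \<omega>) / qq e c \<omega> \<le> (1/4) / (3/4)"
    using q by (intro frac_le) auto
  then show ?thesis using q unfolding sig_def by auto
qed

lemma pp_bnd: "0 \<le> pp e c k \<omega> \<and> pp e c k \<omega> \<le> (1/3)^k"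
proof (induction k arbitrary: \<omega>)
  case 0 then show ?case by simp
next
  case (Suc k)
  have s: "0 \<le> sig e c (shift e \<omega>)" "sig e c (shift e \<omega>) \<le> 1/3" using sig_bnd by auto
  have p: "0 \<le> pp e c k (shift e \<omega>)" "pp e c k (shift e \<omega>) \<le> (1/3)^k" using Suc by auto
  have "sig e c (shift e \<omega>) * pp e c k (shift e \<omega>) \<le> (1/3) * (1/3)^k"
    using s p by (intro mult_mono) auto
  then show ?case using s p by simp
qed

lemma pp_summable: "summable (\<lambda>k. pp e c k \<omega>)"
  by (rule summable_comparison_test[of _ "\<lambda>k. (1/3::real)^k"])
     (use pp_bnd in auto)

lemma SS_rec: "SS e c \<omega> = 1 + sig e c (shift e \<omega>) * SS e c (shift e \<omega>)"
proof -
  have "SS e c \<omega> = pp e c 0 \<omega> + (\<Sum>k. pp e c (Suc k) \<omega>)"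
    unfolding SS_def using suminf_split_head[OF pp_summable[of \<omega>]] by simp
  also have "(\<Sum>k. pp e c (Suc k) \<omega>) = sig e c (shift e \<omega>) * SS e c (shift e \<omega>)"
    unfolding pp.simps SS_def by (rule suminf_mult[OF pp_summable])
  finally show ?thesis by simp
qed

lemma SS_bnd: "1 \<le> SS e c \<omega> \<and> SS e c \<omega> \<le> 3/2"
proof -
  have "SS e c \<omega> \<le> (\<Sum>k. (1/3::real)^k)"
    unfolding SS_def
    by (rule suminf_le) (use pp_bnd pp_summable in auto)
  also have "\<dots> = 3/2" by (subst suminf_geometric) auto
  finally have u: "SS e c \<omega> \<le> 3/2" .
  have "0 \<le> SS e c (shift e \<omega>)" unfolding SS_def
    by (rule suminf_nonneg[OF pp_summable]) (use pp_bnd in auto)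
  then have "0 \<le> sig e c (shift e \<omega>) * SS e c (shift e \<omega>)"
    using sig_bnd by simp
  then show ?thesis using u SS_rec[of \<omega>] by simp
qed

lemma hh_bnd: "1 \<le> hh e c \<omega> \<and> hh e c \<omega> \<le> 2"
proof -
  have q: "3/4 \<le> qq e c \<omega>" "qq e c \<omega> \<le> 1" using qq_bnd[OF c0 c1] by auto
  have s: "1 \<le> SS e c \<omega>" "SS e c \<omega> \<le> 3/2" using SS_bnd by auto
  have "SS e c \<omega> / qq e c \<omega> \<le> (3/2) / (3/4)" using q s by (intro frac_le) auto
  moreover have "1 \<le> SS e c \<omega> / qq e c \<omega>" using q s by simp
  ultimately show ?thesis unfolding hh_def by simp
qed

lemma flux: "hh e c \<omega> * qq e c \<omega> - hh e c (shift e \<omega>) * (1 - qq e c (shift e \<omega>)) = 1"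
proof -
  have q: "qq e c \<omega> > 0" "qq e c (shift e \<omega>) > 0" using qq_pos[OF c0 c1] by auto
  have 1: "hh e c \<omega> * qq e c \<omega> = SS e c \<omega>" unfolding hh_def using q by simp
  have 2: "hh e c (shift e \<omega>) * (1 - qq e c (shift e \<omega>)) = sig e c (shift e \<omega>) * SS e c (shift e \<omega>)"
    unfolding hh_def sig_def by simp
  show ?thesis unfolding 1 2 using SS_rec[of \<omega>] by simp
qed

lemma hh_lower: "hh e c \<omega> \<ge> 1 + c * rho e (shift (-e) \<omega>)"
proof -
  have q: "3/4 \<le> qq e c \<omega>" "qq e c \<omega> \<le> 1" using qq_bnd[OF c0 c1] by auto
  have q2: "3/4 \<le> qq e c (shift (-e) \<omega>)" "qq e c (shift (-e) \<omega>) \<le> 1" using qq_bnd[OF c0 c1] by auto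
  have "0 \<le> (1 - qq e c \<omega>)^2" by simp
  then have "qq e c \<omega> * (2 - qq e c \<omega>) \<le> 1" by (simp add: power2_eq_square algebra_simps)
  then have "1 / qq e c \<omega> \<ge> 2 - qq e c \<omega>"
    using q by (simp add: le_divide_eq mult.commute)
  moreover have "hh e c \<omega> \<ge> 1 / qq e c \<omega>"
    unfolding hh_def using SS_bnd[of \<omega>] q by (simp add: divide_right_mono)
  moreover have "1 - qq e c \<omega> = c * rho e (shift (-e) \<omega>) / qq e c (shift (-e) \<omega>)"
    using qq_fix[OF c0 c1, where e=e and \<omega>=\<omega>] by simp
  moreover have "c * rho e (shift (-e) \<omega>) / qq e c (shift (-e) \<omega>) \<ge> c * rho e (shift (-e) \<omega>)"
    using q2 c0 rho_bnd by (simp add: le_divide_eq mult_left_le)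
  ultimately show ?thesis by linarith
qed

lemma hh_inv: "hh e c (shift (-e) \<omega>) * qq e c (shift (-e) \<omega>) + hh e c (shift e \<omega>) * (1 - qq e c (shift e \<omega>)) = hh e c \<omega>"
proof -
  have "shift e (shift (-e) \<omega>) = \<omega>" by (simp add: shift_shift)
  then have "hh e c (shift (-e) \<omega>) * qq e c (shift (-e) \<omega>) - hh e c \<omega> * (1 - qq e c \<omega>) = 1"
    using flux[of "shift (-e) \<omega>"] by simp
  then show ?thesis using flux[of \<omega>] by (simp add: algebra_simps)
qed

lemma meas_sig[measurable]: "sig e c \<in> borel_measurable Omega"
  unfolding sig_def[abs_def] using meas_qq[OF c0 c1] by measurable

lemma meas_pp[measurable]: "pp e c k \<in> borel_measurable Omega"
proof (induction k)
  case 0 then show ?case by simp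
next
  case (Suc k)
  have "(\<lambda>\<omega>. sig e c (shift e \<omega>)) \<in> borel_measurable Omega"
    using measurable_comp[OF meas_shift meas_sig] by (simp add: comp_def)
  moreover have "(\<lambda>\<omega>. pp e c k (shift e \<omega>)) \<in> borel_measurable Omega"
    using measurable_comp[OF meas_shift Suc] by (simp add: comp_def)
  ultimately show ?case by (simp only: pp.simps) measurable
qed

lemma meas_SS[measurable]: "SS e c \<in> borel_measurable Omega"
proof (rule borel_measurable_LIMSEQ_metric)
  show "(\<lambda>n. \<Sum>k<n. pp e c k \<omega>) \<longlonglongrightarrow> SS e c \<omega>" for \<omega>
    unfolding SS_def using pp_summable summable_LIMSEQ by blast
  show "(\<lambda>\<omega>. \<Sum>k<n. pp e c k \<omega>) \<in> borel_measurable Omega" for n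
    by measurable
qed

lemma meas_hh[measurable]: "hh e c \<in> borel_measurable Omega"
  unfolding hh_def[abs_def] using meas_qq[OF c0 c1] by measurable

end

lemma sig_cont: "continuous_on {0..1/8} (\<lambda>c. sig e c \<omega>)"
proof -
  have "\<forall>x\<in>{0..1/8}. qq e x \<omega> \<noteq> 0"
    using qq_pos by (metis atLeastAtMost_iff less_irrefl)
  then show ?thesis unfolding sig_def
    by (intro continuous_intros qq_cont) auto
qed

lemma pp_cont: "continuous_on {0..1/8} (\<lambda>c. pp e c k \<omega>)"
proof (induction k arbitrary: \<omega>)
  case 0 then show ?case by simp
next
  case (Suc k) then show ?case by (simp only: pp.simps) (intro continuous_intros sig_cont)
qed

lemma SS_cont: "continuous_on {0..1/8} (\<lambda>c. SS e c \<omega>)"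
proof (rule uniform_limit_theorem[where f = "\<lambda>n c. \<Sum>k<n. pp e c k \<omega>" and F = sequentially])
  show "\<forall>\<^sub>F n in sequentially. continuous_on {0..1/8} (\<lambda>c. \<Sum>k<n. pp e c k \<omega>)"
    by (simp add: pp_cont continuous_on_sum)
  show "uniform_limit {0..1/8} (\<lambda>n c. \<Sum>k<n. pp e c k \<omega>) (\<lambda>c. SS e c \<omega>) sequentially"
    unfolding SS_def
  proof (rule Weierstrass_m_test[where M = "\<lambda>k. (1/3::real)^k"])
    show "norm (pp e c k \<omega>) \<le> (1/3)^k" if "c \<in> {0..1/8}" for c k
      using pp_bnd[of c e k \<omega>] that by auto
  qed simp
qed simp

lemma hh_cont: "continuous_on {0..1/8} (\<lambda>c. hh e c \<omega>)"
proof -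
  have "\<forall>x\<in>{0..1/8}. qq e x \<omega> \<noteq> 0"
    using qq_pos by (metis atLeastAtMost_iff less_irrefl)
  then show ?thesis unfolding hh_def
    by (intro continuous_intros qq_cont SS_cont) auto
qed

lemma qq_zero: "qq e 0 \<omega> = 1"
proof -
  have "(\<lambda>n. qn e 0 n \<omega>) \<longlonglongrightarrow> qq e 0 \<omega>" by (rule qn_lim) auto
  moreover have "qn e 0 n \<omega> = 1" for n by (cases n) auto
  ultimately have "(\<lambda>n. 1::real) \<longlonglongrightarrow> qq e 0 \<omega>" by simp
  then show ?thesis using LIMSEQ_unique[OF _ tendsto_const] by metis
qed

lemma hh_zero: "hh e 0 \<omega> = 1"
proof -
  have "pp e 0 k \<omega> = (if k = 0 then 1 else 0)" for k by (cases k) (simp_all add: sig_def qq_zero)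
  then have "(\<lambda>k. pp e 0 k \<omega>) = (\<lambda>k. if k = 0 then 1 else 0)" by blast
  moreover have "(\<lambda>k::nat. if k = 0 then 1 else 0) sums (1::real)"
    using sums_single[of 0 "\<lambda>_. 1::real"] by simp
  ultimately have "SS e 0 \<omega> = 1"
    unfolding SS_def by (simp add: sums_iff)
  then show ?thesis by (simp add: hh_def qq_zero)
qed




lemma U_e: "e \<in> U \<Longrightarrow> U = {e, -e}" unfolding U_def by auto
lemma U_ne: "e \<in> U \<Longrightarrow> e \<noteq> -e" unfolding U_def by auto
lemma U_neg: "e \<in> U \<Longrightarrow> -e \<in> U" unfolding U_def by auto
lemma U_sq: "e \<in> U \<Longrightarrow> e * e = 1" unfolding U_def by auto
lemma finite_U[simp]: "finite U" unfolding U_def by simp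
lemma countable_U[simp]: "countable U" by (simp add: countable_finite)

definition qz :: "int \<Rightarrow> real \<Rightarrow> env \<Rightarrow> int \<Rightarrow> real" where
  "qz e c \<omega> z = (if z = e then qq e c \<omega> else 1 - qq e c \<omega>)"

lemma sum_U: assumes "e \<in> U" shows "(\<Sum>z\<in>U. f z) = f e + f (-e)"
proof -
  have u: "U = {e, -e}" and "e \<noteq> -e" using U_e[OF assms] U_ne[OF assms] by auto
  have "(\<Sum>z\<in>U. f z) = (\<Sum>z\<in>{e,-e}. f z)" by (simp only: u)
  then show ?thesis using \<open>e \<noteq> -e\<close> by simp
qed

context Pset begin

sublocale PP: prob_space P by (rule prob)

definition Zc :: "int \<Rightarrow> real \<Rightarrow> real" where "Zc e c = (\<integral>\<omega>. hh e c \<omega> \<partial>P)"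
definition hn :: "int \<Rightarrow> real \<Rightarrow> env \<Rightarrow> real" where "hn e c \<omega> = hh e c \<omega> / Zc e c"
definition mu :: "int \<Rightarrow> real \<Rightarrow> (env \<times> int) measure" where
  "mu e c = density (P \<Otimes>\<^sub>M count_space U) (\<lambda>p. ennreal (hn e c (fst p) * qz e c (fst p) (snd p)))"

lemma sets_PU: "sets (P \<Otimes>\<^sub>M count_space U) = sets OmegaU"
  unfolding OmegaU_def by (rule sets_pair_measure_cong[OF sets_P refl])
lemma meas_PU: "measurable (P \<Otimes>\<^sub>M count_space U) = measurable OmegaU"
  by (rule ext, rule measurable_cong_sets[OF sets_PU refl])
lemma space_PU: "space (P \<Otimes>\<^sub>M count_space U) = space Omega \<times> U"
  by (simp add: space_pair_measure space_P)

lemma integrable_bnd: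
  assumes "f \<in> borel_measurable Omega" "\<And>\<omega>. \<bar>f \<omega>\<bar> \<le> B"
  shows "integrable P (f :: env \<Rightarrow> real)"
  by (rule PP.integrable_const_bound[where B = B]) (use assms in \<open>auto simp: meas_P\<close>)

context fixes e :: int and c :: real
  assumes eU: "e \<in> U" and c0: "0 \<le> c" and c1: "c \<le> 1/8"
begin

lemmas hhb = hh_bnd[OF c0 c1, where e=e]
lemmas mhh = meas_hh[OF c0 c1, where e=e]
lemmas mqq = meas_qq[OF c0 c1, where e=e]
lemmas qqb = qq_bnd[OF c0 c1, where e=e]

lemma int_hh: "integrable P (hh e c)"
proof (rule integrable_bnd[where B = 2])
  show "\<bar>hh e c \<omega>\<bar> \<le> 2" for \<omega> using hhb[of \<omega>] by auto
qed (rule mhh)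

lemma Zc_bnd: "1 \<le> Zc e c" "Zc e c \<le> 2"
proof -
  have "(\<integral>\<omega>. 1 \<partial>P) \<le> Zc e c" unfolding Zc_def
    by (rule integral_mono[OF _ int_hh]) (use hhb in auto)
  then show "1 \<le> Zc e c" using PP.prob_space by simp
  have "Zc e c \<le> (\<integral>\<omega>. 2 \<partial>P)" unfolding Zc_def
    by (rule integral_mono[OF int_hh]) (use hhb in auto)
  then show "Zc e c \<le> 2" using PP.prob_space by simp
qed

lemma meas_qz[measurable]: "(\<lambda>p. qz e c (fst p) (snd p)) \<in> borel_measurable (Omega \<Otimes>\<^sub>M count_space U)"
proof -
  have [measurable]: "qq e c \<in> borel_measurable Omega" by (rule mqq)
  show ?thesis unfolding qz_def by measurable
qed

lemma meas_hn[measurable]: "hn e c \<in> borel_measurable Omega"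
  unfolding hn_def[abs_def] using mhh by measurable

lemma meas_dens: "(\<lambda>p. ennreal (hn e c (fst p) * qz e c (fst p) (snd p))) \<in> borel_measurable OmegaU"
  unfolding OmegaU_def by measurable

lemma hn_pos: "0 < hn e c \<omega>"
  using hhb[of \<omega>] Zc_bnd unfolding hn_def by simp

lemma qz_nonneg: "0 \<le> qz e c \<omega> z"
  using qqb[of \<omega>] unfolding qz_def by auto

lemma qz_sum: "qz e c \<omega> e + qz e c \<omega> (-e) = 1"
  using U_ne[OF eU] unfolding qz_def by auto

lemma emeasure_mu:
  assumes X: "X \<in> sets OmegaU"
  shows "emeasure (mu e c) X =
    (\<integral>\<^sup>+\<omega>. (\<Sum>z\<in>U. ennreal (hn e c \<omega> * qz e c \<omega> z) * indicator X (\<omega>, z)) \<partial>P)"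
proof -
  let ?f = "\<lambda>p. ennreal (hn e c (fst p) * qz e c (fst p) (snd p)) * indicator X p"
  have m: "?f \<in> borel_measurable (P \<Otimes>\<^sub>M count_space U)"
    unfolding meas_PU OmegaU_def using X[unfolded OmegaU_def] by measurable
  have "emeasure (mu e c) X = integral\<^sup>N (P \<Otimes>\<^sub>M count_space U) ?f"
    unfolding mu_def
    by (rule emeasure_density) (use X meas_dens in \<open>auto simp: meas_PU sets_PU\<close>)
  also have "\<dots> = (\<integral>\<^sup>+\<omega>. \<integral>\<^sup>+z. ?f (\<omega>, z) \<partial>count_space U \<partial>P)"
    by (rule sigma_finite_measure.nn_integral_fst[symmetric, OF _ m])
       (rule sigma_finite_measure_count_space_finite, simp)
  also have "\<dots> = (\<integral>\<^sup>+\<omega>. (\<Sum>z\<in>U. ennreal (hn e c \<omega> * qz e c \<omega> z) * indicator X (\<omega>, z)) \<partial>P)"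
    by (simp add: nn_integral_count_space_finite)
  finally show ?thesis .
qed

lemma sets_mu: "sets (mu e c) = sets OmegaU" unfolding mu_def by (simp add: sets_PU)
lemma meas_mu: "measurable (mu e c) = measurable OmegaU"
  by (rule ext, rule measurable_cong_sets[OF sets_mu refl])
lemma space_mu: "space (mu e c) = space Omega \<times> U"
  using sets_eq_imp_space_eq[OF sets_mu] by (simp add: OmegaU_def space_pair_measure)

lemma int_hn: "(\<integral>\<omega>. hn e c \<omega> \<partial>P) = 1"
  unfolding hn_def using Zc_bnd by (simp add: Zc_def)

lemma integrable_hn: "integrable P (hn e c)"
  unfolding hn_def using int_hh by simp

lemma emeasure_mu_AU:
  assumes A: "A \<in> sets Omega"
  shows "emeasure (mu e c) (A \<times> U) = (\<integral>\<^sup>+\<omega>. ennreal (hn e c \<omega>) * indicator A \<omega> \<partial>P)"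
proof -
  have X: "A \<times> U \<in> sets OmegaU" unfolding OmegaU_def using A by auto
  have "(\<Sum>z\<in>U. ennreal (hn e c \<omega> * qz e c \<omega> z) * indicator (A \<times> U) (\<omega>, z))
      = ennreal (hn e c \<omega>) * indicator A \<omega>" for \<omega>
  proof -
    have "(\<Sum>z\<in>U. ennreal (hn e c \<omega> * qz e c \<omega> z) * indicator (A \<times> U) (\<omega>, z))
       = (\<Sum>z\<in>U. ennreal (hn e c \<omega> * qz e c \<omega> z)) * indicator A \<omega>"
      by (simp add: sum_distrib_right indicator_def)
    also have "(\<Sum>z\<in>U. ennreal (hn e c \<omega> * qz e c \<omega> z)) = ennreal (\<Sum>z\<in>U. hn e c \<omega> * qz e c \<omega> z)"
      by (rule sum_ennreal) (use hn_pos qz_nonneg in \<open>auto intro: mult_nonneg_nonneg less_imp_le\<close>)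
    also have "(\<Sum>z\<in>U. hn e c \<omega> * qz e c \<omega> z) = hn e c \<omega>"
      using qz_sum[of \<omega>] by (simp add: sum_U[OF eU] distrib_left[symmetric])
    finally show ?thesis .
  qed
  then show ?thesis by (simp add: emeasure_mu[OF X])
qed

lemma mu_M1: "mu e c \<in> M1"
proof -
  have "emeasure (mu e c) (space (mu e c)) = emeasure (mu e c) (space Omega \<times> U)"
    by (simp add: space_mu)
  also have "\<dots> = (\<integral>\<^sup>+\<omega>. ennreal (hn e c \<omega>) * indicator (space Omega) \<omega> \<partial>P)"
    by (rule emeasure_mu_AU) simp
  also have "\<dots> = (\<integral>\<^sup>+\<omega>. ennreal (hn e c \<omega>) \<partial>P)"
    by (rule nn_integral_cong) (simp add: space_P)
  also have "\<dots> = ennreal (\<integral>\<omega>. hn e c \<omega> \<partial>P)"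
    by (rule nn_integral_eq_integral[OF integrable_hn]) (use hn_pos in \<open>auto intro: less_imp_le\<close>)
  also have "\<dots> = 1" by (simp add: int_hn)
  finally show ?thesis unfolding M1_def using sets_mu by (auto intro: prob_spaceI)
qed

lemma marg1_mu: "marg1 (mu e c) = density P (\<lambda>\<omega>. ennreal (hn e c \<omega>))"
proof (rule measure_eqI)
  show "sets (marg1 (mu e c)) = sets (density P (\<lambda>\<omega>. ennreal (hn e c \<omega>)))"
    by (simp add: marg1_def sets_P)
  fix A assume "A \<in> sets (marg1 (mu e c))"
  then have A: "A \<in> sets Omega" by (simp add: marg1_def)
  have f: "fst \<in> mu e c \<rightarrow>\<^sub>M Omega" unfolding meas_mu OmegaU_def by simp
  have "emeasure (marg1 (mu e c)) A = emeasure (mu e c) (fst -` A \<inter> space (mu e c))"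
    unfolding marg1_def by (rule emeasure_distr[OF f A])
  also have "fst -` A \<inter> space (mu e c) = A \<times> U"
    using sets.sets_into_space[OF A] by (auto simp: space_mu)
  also have "emeasure (mu e c) (A \<times> U) = (\<integral>\<^sup>+\<omega>. ennreal (hn e c \<omega>) * indicator A \<omega> \<partial>P)"
    by (rule emeasure_mu_AU[OF A])
  also have "\<dots> = emeasure (density P (\<lambda>\<omega>. ennreal (hn e c \<omega>))) A"
    by (rule emeasure_density[symmetric]) (use A in \<open>auto simp: meas_P sets_P\<close>)
  finally show "emeasure (marg1 (mu e c)) A = emeasure (density P (\<lambda>\<omega>. ennreal (hn e c \<omega>))) A" .
qed

lemma meas_phi: "(\<lambda>p. shift (snd p) (fst p)) \<in> mu e c \<rightarrow>\<^sub>M Omega"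
  unfolding meas_mu
proof (rule measurable_compose_countable'[where I = U and f = "\<lambda>i p. shift i (fst p)" and g = snd])
  show "(\<lambda>p. shift i (fst p)) \<in> OmegaU \<rightarrow>\<^sub>M Omega" for i
    unfolding OmegaU_def using measurable_comp[OF measurable_fst meas_shift] by (simp add: comp_def)
  show "snd \<in> OmegaU \<rightarrow>\<^sub>M count_space U" unfolding OmegaU_def by simp
qed simp

lemma marg2_mu: "marg2 (mu e c) = density P (\<lambda>\<omega>. ennreal (hn e c \<omega>))"
proof (rule measure_eqI)
  show "sets (marg2 (mu e c)) = sets (density P (\<lambda>\<omega>. ennreal (hn e c \<omega>)))"
    by (simp add: marg2_def sets_P)
  fix A assume "A \<in> sets (marg2 (mu e c))"
  then have A: "A \<in> sets Omega" by (simp add: marg2_def)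
  let ?phi = "\<lambda>p. shift (snd p) (fst p)"
  let ?X = "?phi -` A \<inter> space (mu e c)"
  have eqphi: "(\<lambda>(\<eta>, z). shift z \<eta>) = ?phi" by auto
  have X: "?X \<in> sets OmegaU"
    using measurable_sets[OF meas_phi A] by (simp add: sets_mu)
  have mA[measurable]: "A \<in> sets Omega" by (rule A)
  have [measurable]: "qq e c \<in> borel_measurable Omega" by (rule mqq)
  have ms[measurable]: "(\<lambda>\<omega>. f (shift z \<omega>)) \<in> borel_measurable Omega"
    if "f \<in> borel_measurable Omega" for f :: "env \<Rightarrow> real" and z
    using measurable_comp[OF meas_shift that] by (simp add: comp_def)
  have msi[measurable]: "(\<lambda>\<omega>. indicator A (shift z \<omega>) :: ennreal) \<in> borel_measurable Omega" for z
    using measurable_comp[OF meas_shift borel_measurable_indicator[OF A]] by (simp add: comp_def)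
  define G1 where "G1 \<omega>' = ennreal (hn e c (shift (-e) \<omega>') * qq e c (shift (-e) \<omega>')) * indicator A \<omega>'" for \<omega>'
  define G2 where "G2 \<omega>' = ennreal (hn e c (shift e \<omega>') * (1 - qq e c (shift e \<omega>'))) * indicator A \<omega>'" for \<omega>'
  have mG1: "G1 \<in> borel_measurable Omega" unfolding G1_def by measurable
  have mG2: "G2 \<in> borel_measurable Omega" unfolding G2_def by measurable
  have ss1: "shift (-e) (shift e \<omega>) = \<omega>" for \<omega> by (simp add: shift_shift)
  have ss2: "shift e (shift (-e) \<omega>) = \<omega>" for \<omega> by (simp add: shift_shift)
  have "emeasure (marg2 (mu e c)) A = emeasure (mu e c) ?X"
    unfolding marg2_def eqphi by (rule emeasure_distr[OF meas_phi A])
  also have "\<dots> = (\<integral>\<^sup>+\<omega>. (\<Sum>z\<in>U. ennreal (hn e c \<omega> * qz e c \<omega> z) * indicator ?X (\<omega>, z)) \<partial>P)"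
    by (rule emeasure_mu[OF X])
  also have "\<dots> = (\<integral>\<^sup>+\<omega>. G1 (shift e \<omega>) + G2 (shift (-e) \<omega>) \<partial>P)"
  proof (rule nn_integral_cong)
    fix \<omega> assume "\<omega> \<in> space P"
    then have om: "\<omega> \<in> space Omega" by (simp add: space_P)
    have "indicator ?X (\<omega>, z) = (indicator A (shift z \<omega>) :: ennreal)" if "z \<in> U" for z
      using om that by (auto simp: indicator_def space_mu)
    then have "(\<Sum>z\<in>U. ennreal (hn e c \<omega> * qz e c \<omega> z) * indicator ?X (\<omega>, z))
        = (\<Sum>z\<in>U. ennreal (hn e c \<omega> * qz e c \<omega> z) * indicator A (shift z \<omega>))"
      by (intro sum.cong) auto
    also have "\<dots> = G1 (shift e \<omega>) + G2 (shift (-e) \<omega>)"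
      unfolding sum_U[OF eU] G1_def G2_def ss1 ss2 qz_def using U_ne[OF eU] by simp
    finally show "(\<Sum>z\<in>U. ennreal (hn e c \<omega> * qz e c \<omega> z) * indicator ?X (\<omega>, z))
        = G1 (shift e \<omega>) + G2 (shift (-e) \<omega>)" .
  qed
  also have "\<dots> = (\<integral>\<^sup>+\<omega>. G1 (shift e \<omega>) \<partial>P) + (\<integral>\<^sup>+\<omega>. G2 (shift (-e) \<omega>) \<partial>P)"
    by (rule nn_integral_add) (use mG1 mG2 in \<open>auto simp: meas_P intro: measurable_comp[OF meas_shift, unfolded comp_def]\<close>)
  also have "\<dots> = integral\<^sup>N P G1 + integral\<^sup>N P G2"
    using nn_shift[OF mG1] nn_shift[OF mG2] by simp
  also have "\<dots> = (\<integral>\<^sup>+\<omega>. G1 \<omega> + G2 \<omega> \<partial>P)"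
    by (rule nn_integral_add[symmetric]) (use mG1 mG2 in \<open>auto simp: meas_P\<close>)
  also have "\<dots> = (\<integral>\<^sup>+\<omega>. ennreal (hn e c \<omega>) * indicator A \<omega> \<partial>P)"
  proof (rule nn_integral_cong)
    fix \<omega>
    have q1: "0 \<le> hn e c (shift (-e) \<omega>) * qq e c (shift (-e) \<omega>)"
      using hn_pos[of "shift (-e) \<omega>"] qqb[of "shift (-e) \<omega>"] by simp
    have q2: "0 \<le> hn e c (shift e \<omega>) * (1 - qq e c (shift e \<omega>))"
      using hn_pos[of "shift e \<omega>"] qqb[of "shift e \<omega>"] by simp
    have "hn e c (shift (-e) \<omega>) * qq e c (shift (-e) \<omega>) + hn e c (shift e \<omega>) * (1 - qq e c (shift e \<omega>))
        = hn e c \<omega>"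
      unfolding hn_def using hh_inv[OF c0 c1, of e \<omega>] by (simp add: divide_simps)
    then show "G1 \<omega> + G2 \<omega> = ennreal (hn e c \<omega>) * indicator A \<omega>"
      unfolding G1_def G2_def using q1 q2
      by (simp add: distrib_right[symmetric] ennreal_plus[symmetric])
  qed
  also have "\<dots> = emeasure (density P (\<lambda>\<omega>. ennreal (hn e c \<omega>))) A"
    by (rule emeasure_density[symmetric]) (use A in \<open>auto simp: meas_P sets_P\<close>)
  finally show "emeasure (marg2 (mu e c)) A = emeasure (density P (\<lambda>\<omega>. ennreal (hn e c \<omega>))) A" .
qed

lemma emeasure_mu_Az:
  assumes A: "A \<in> sets Omega" and z: "z \<in> U"
  shows "emeasure (mu e c) (A \<times> {z}) = (\<integral>\<^sup>+\<omega>. ennreal (hn e c \<omega> * qz e c \<omega> z) * indicator A \<omega> \<partial>P)"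
proof -
  have X: "A \<times> {z} \<in> sets OmegaU" unfolding OmegaU_def using A z by auto
  have "(\<Sum>z'\<in>U. ennreal (hn e c \<omega> * qz e c \<omega> z') * indicator (A \<times> {z}) (\<omega>, z'))
      = ennreal (hn e c \<omega> * qz e c \<omega> z) * indicator A \<omega>" for \<omega>
  proof -
    have "(\<Sum>z'\<in>U. ennreal (hn e c \<omega> * qz e c \<omega> z') * indicator (A \<times> {z}) (\<omega>, z'))
      = (\<Sum>z'\<in>U. if z' = z then ennreal (hn e c \<omega> * qz e c \<omega> z') * indicator A \<omega> else 0)"
      by (intro sum.cong) (auto simp: indicator_def)
    also have "\<dots> = ennreal (hn e c \<omega> * qz e c \<omega> z) * indicator A \<omega>"
      using z by (simp add: sum.delta)
    finally show ?thesis .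
  qed
  then show ?thesis by (simp add: emeasure_mu[OF X])
qed

end
end


context Pset begin
context fixes e :: int and c :: real
  assumes eU: "e \<in> U" and c0: "0 \<le> c" and c1: "c \<le> 1/8"
begin
lemmas hhb_E = hh_bnd[OF c0 c1, where e=e]
lemmas mhh_E[measurable] = meas_hh[OF c0 c1, where e=e]
lemmas mqq_E[measurable] = meas_qq[OF c0 c1, where e=e]
lemmas mhn_E[measurable] = meas_hn[OF eU c0 c1]
lemmas qqb_E = qq_bnd[OF c0 c1, where e=e]
lemmas hn_pos_E = hn_pos[OF eU c0 c1]
lemmas qz_nonneg_E = qz_nonneg[OF eU c0 c1]
lemmas Zc_bnd_E = Zc_bnd[OF eU c0 c1]
lemmas emeasure_mu_Az_E = emeasure_mu_Az[OF eU c0 c1]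
lemmas marg1_mu_E = marg1_mu[OF eU c0 c1]
lemmas mu_M1_E = mu_M1[OF eU c0 c1]
lemmas space_mu_E = space_mu[OF eU c0 c1]
lemmas sets_mu_E = sets_mu[OF eU c0 c1]
lemma mu_density:
  assumes A: "A \<in> sets Omega" and z: "z \<in> U" and g: "g \<in> borel_measurable Omega"
    and ae: "AE \<omega> in P. g \<omega> = qz e c \<omega> z"
  shows "emeasure (mu e c) (A \<times> {z}) = (\<integral>\<^sup>+\<omega>. ennreal (g \<omega>) * indicator A \<omega> \<partial>marg1 (mu e c))"
proof -
  have "(\<integral>\<^sup>+\<omega>. ennreal (g \<omega>) * indicator A \<omega> \<partial>marg1 (mu e c))
     = (\<integral>\<^sup>+\<omega>. ennreal (hn e c \<omega>) * (ennreal (g \<omega>) * indicator A \<omega>) \<partial>P)"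
    unfolding marg1_mu_E by (rule nn_integral_density) (use A g in \<open>auto simp: meas_P\<close>)
  also have "\<dots> = (\<integral>\<^sup>+\<omega>. ennreal (hn e c \<omega> * qz e c \<omega> z) * indicator A \<omega> \<partial>P)"
  proof (rule nn_integral_cong_AE)
    show "AE \<omega> in P. ennreal (hn e c \<omega>) * (ennreal (g \<omega>) * indicator A \<omega>) =
        ennreal (hn e c \<omega> * qz e c \<omega> z) * indicator A \<omega>"
      using ae
    proof (rule AE_mp, intro AE_I2 impI)
      fix \<omega> assume "g \<omega> = qz e c \<omega> z"
      then show "ennreal (hn e c \<omega>) * (ennreal (g \<omega>) * indicator A \<omega>) =
        ennreal (hn e c \<omega> * qz e c \<omega> z) * indicator A \<omega>"
        using hn_pos_E[of \<omega>] qz_nonneg_E[of \<omega> z] by (simp add: ennreal_mult mult.assoc)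
    qed
  qed
  finally show ?thesis using emeasure_mu_Az_E[OF A z] by simp
qed

lemma mu_xi: "(\<integral>p. real_of_int (snd p) \<partial>mu e c) = real_of_int e / Zc e c"
proof -
  interpret MU: prob_space "mu e c" using mu_M1_E unfolding M1_def by blast
  let ?S = "\<lambda>z. space Omega \<times> {z}"
  have Sset: "?S z \<in> sets (mu e c)" if "z \<in> U" for z
    using that by (simp add: sets_mu_E OmegaU_def)
  have meas_z: "measure (mu e c) (?S z) = (\<integral>\<omega>. hn e c \<omega> * qz e c \<omega> z \<partial>P)" if z: "z \<in> U" for z
  proof -
    have iq: "integrable P (\<lambda>\<omega>. hn e c \<omega> * qz e c \<omega> z)"
    proof (rule integrable_bnd[where B = 2])
      have [measurable]: "qq e c \<in> borel_measurable Omega" by (rule mqq_E)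
      show "(\<lambda>\<omega>. hn e c \<omega> * qz e c \<omega> z) \<in> borel_measurable Omega"
        unfolding qz_def by measurable
      fix \<omega>
      have "hh e c \<omega> / Zc e c \<le> hh e c \<omega> / 1"
        using hhb_E[of \<omega>] Zc_bnd_E by (intro divide_left_mono) auto
      then have h2: "hn e c \<omega> \<le> 2" using hhb_E[of \<omega>] unfolding hn_def by simp
      have q1: "qz e c \<omega> z \<le> 1" "0 \<le> qz e c \<omega> z" using qqb_E[of \<omega>] qz_nonneg_E[of \<omega> z] unfolding qz_def by auto
      have hq: "hn e c \<omega> * qz e c \<omega> z \<le> hn e c \<omega>"
        using hn_pos_E[of \<omega>] q1 by (intro mult_left_le) auto
      have "hn e c \<omega> * qz e c \<omega> z \<le> 2" using h2 hq by linarith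
      moreover have "0 \<le> hn e c \<omega> * qz e c \<omega> z"
        using hn_pos_E[of \<omega>] q1 by simp
      ultimately show "\<bar>hn e c \<omega> * qz e c \<omega> z\<bar> \<le> 2" by simp
    qed
    have "emeasure (mu e c) (?S z) = (\<integral>\<^sup>+\<omega>. ennreal (hn e c \<omega> * qz e c \<omega> z) * indicator (space Omega) \<omega> \<partial>P)"
      by (rule emeasure_mu_Az_E[OF _ z]) simp
    also have "\<dots> = (\<integral>\<^sup>+\<omega>. ennreal (hn e c \<omega> * qz e c \<omega> z) \<partial>P)"
      by (rule nn_integral_cong) (simp add: space_P)
    also have "\<dots> = ennreal (\<integral>\<omega>. hn e c \<omega> * qz e c \<omega> z \<partial>P)"
      by (rule nn_integral_eq_integral[OF iq], rule AE_I2)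
         (intro mult_nonneg_nonneg less_imp_le[OF hn_pos_E] qz_nonneg_E)
    finally show ?thesis unfolding measure_def
      using integral_nonneg_AE[of "\<lambda>\<omega>. hn e c \<omega> * qz e c \<omega> z" P]
        mult_nonneg_nonneg[OF less_imp_le[OF hn_pos_E] qz_nonneg_E]
      by simp
  qed
  have "(\<integral>p. real_of_int (snd p) \<partial>mu e c)
      = (\<integral>p. real_of_int e * (indicator (?S e) p - indicator (?S (-e)) p) \<partial>mu e c)"
  proof (rule Bochner_Integration.integral_cong[OF refl])
    fix p assume "p \<in> space (mu e c)"
    then have "fst p \<in> space Omega" "snd p \<in> U" by (auto simp: space_mu_E)
    then show "real_of_int (snd p) = real_of_int e * (indicator (?S e) p - indicator (?S (-e)) p)"
      using U_e[OF eU] U_ne[OF eU] U_sq[OF eU]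
      by (cases p) (auto simp: indicator_def)
  qed
  also have "\<dots> = real_of_int e * (measure (mu e c) (?S e) - measure (mu e c) (?S (-e)))"
    using Sset[OF eU] Sset[OF U_neg[OF eU]]
    by (simp add: Bochner_Integration.integral_indicator MU.integrable_const_bound[where B=1]
        Int_absorb2 sets.sets_into_space)
  also have "measure (mu e c) (?S e) - measure (mu e c) (?S (-e)) = 1 / Zc e c"
  proof -
    have q1: "qz e c \<omega> e = qq e c \<omega>" "qz e c \<omega> (-e) = 1 - qq e c \<omega>" for \<omega>
      using U_ne[OF eU] by (auto simp: qz_def)
    have [measurable]: "qq e c \<in> borel_measurable Omega" by (rule mqq_E)
    have [measurable]: "hh e c \<in> borel_measurable Omega" by (rule mhh_E)
    have ih: "integrable P (\<lambda>\<omega>. hh e c \<omega> * qq e c \<omega>)" "integrable P (\<lambda>\<omega>. hh e c \<omega> * (1 - qq e c \<omega>))"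
    proof -
      have b: "hh e c \<omega> * qq e c \<omega> \<le> hh e c \<omega>" "hh e c \<omega> * (1 - qq e c \<omega>) \<le> hh e c \<omega>"
        "0 \<le> hh e c \<omega> * qq e c \<omega>" "0 \<le> hh e c \<omega> * (1 - qq e c \<omega>)" for \<omega>
        using hhb_E[of \<omega>] qqb_E[of \<omega>] by (auto intro: mult_left_le)
      show "integrable P (\<lambda>\<omega>. hh e c \<omega> * qq e c \<omega>)"
        by (rule integrable_bnd[where B=2]) (measurable, use b hhb_E in \<open>smt (verit)\<close>)
      show "integrable P (\<lambda>\<omega>. hh e c \<omega> * (1 - qq e c \<omega>))"
        by (rule integrable_bnd[where B=2]) (measurable, use b hhb_E in \<open>smt (verit)\<close>)
    qed
    have "(\<integral>\<omega>. hh e c \<omega> * qq e c \<omega> \<partial>P) - (\<integral>\<omega>. hh e c \<omega> * (1 - qq e c \<omega>) \<partial>P)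
        = (\<integral>\<omega>. hh e c \<omega> * qq e c \<omega> \<partial>P) - (\<integral>\<omega>. hh e c (shift e \<omega>) * (1 - qq e c (shift e \<omega>)) \<partial>P)"
      using int_shift[of "\<lambda>\<omega>. hh e c \<omega> * (1 - qq e c \<omega>)" e] by simp
    also have "\<dots> = (\<integral>\<omega>. hh e c \<omega> * qq e c \<omega> - hh e c (shift e \<omega>) * (1 - qq e c (shift e \<omega>)) \<partial>P)"
      by (rule Bochner_Integration.integral_diff[symmetric]) (use ih integrable_shift in auto)
    also have "\<dots> = 1" using flux[OF c0 c1] PP.prob_space by simp
    finally have "(\<integral>\<omega>. hh e c \<omega> * qq e c \<omega> \<partial>P) - (\<integral>\<omega>. hh e c \<omega> * (1 - qq e c \<omega>) \<partial>P) = 1" .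
    then show ?thesis
      unfolding meas_z[OF eU] meas_z[OF U_neg[OF eU]] q1 hn_def
      by (simp add: diff_divide_distrib[symmetric])
  qed
  finally show ?thesis by simp
qed

end
end



lemma powr_add_bound:
  fixes a b p :: real assumes p: "0 \<le> p"
  shows "\<bar>a + b\<bar> powr p \<le> 2 powr p * (\<bar>a\<bar> powr p + \<bar>b\<bar> powr p)"
proof -
  have "\<bar>a + b\<bar> \<le> 2 * max \<bar>a\<bar> \<bar>b\<bar>" by auto
  then have "\<bar>a + b\<bar> powr p \<le> (2 * max \<bar>a\<bar> \<bar>b\<bar>) powr p" using powr_mono2[OF p] by simp
  also have "\<dots> = 2 powr p * max \<bar>a\<bar> \<bar>b\<bar> powr p" by (simp add: powr_mult)
  also have "max \<bar>a\<bar> \<bar>b\<bar> powr p \<le> \<bar>a\<bar> powr p + \<bar>b\<bar> powr p"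
    by (cases "\<bar>a\<bar> \<le> \<bar>b\<bar>") (auto simp: max_def)
  then have "2 powr p * max \<bar>a\<bar> \<bar>b\<bar> powr p \<le> 2 powr p * (\<bar>a\<bar> powr p + \<bar>b\<bar> powr p)"
    by (rule mult_left_mono) simp
  finally show ?thesis .
qed

lemma abs_le_powr:
  fixes x p :: real assumes p: "1 \<le> p"
  shows "\<bar>x\<bar> \<le> 1 + \<bar>x\<bar> powr p"
proof (cases "\<bar>x\<bar> \<le> 1")
  case True then show ?thesis by (smt (verit) powr_ge_zero)
next
  case False
  then have "\<bar>x\<bar> powr 1 \<le> \<bar>x\<bar> powr p" by (intro powr_mono p) auto
  then show ?thesis by simp
qed

lemma loop_zero:
  fixes G :: "int \<Rightarrow> int \<Rightarrow> real" and xs :: "nat \<Rightarrow> int"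
  assumes G: "\<And>x. G x 1 + G (x + 1) (-1) = 0"
    and cl: "xs 0 = xs n" and st: "\<forall>k<n. xs (Suc k) - xs k \<in> U"
  shows "(\<Sum>k<n. G (xs k) (xs (Suc k) - xs k)) = 0"
proof -
  define V where "V x = (if 0 \<le> x then (\<Sum>k<nat x. G (int k) 1) else - (\<Sum>k<nat (-x). G (- int k - 1) 1))" for x
  have V1: "V (x + 1) - V x = G x 1" for x
  proof (cases "0 \<le> x")
    case True
    then have "nat (x + 1) = Suc (nat x)" by simp
    then show ?thesis using True by (simp add: V_def)
  next
    case False
    show ?thesis
    proof (cases "x = -1")
      case True then show ?thesis by (simp add: V_def)
    next
      case False2: False
      with False have x: "x + 1 < 0" by simp
      have "nat (- x) = Suc (nat (- x - 1))" using x by simp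
      moreover have "- int (nat (- x - 1)) - 1 = x" using x by simp
      ultimately show ?thesis using x False by (simp add: V_def)
    qed
  qed
  have VG: "G x z = V (x + z) - V x" if "z \<in> U" for x z
  proof -
    have "z = 1 \<or> z = -1" using that by (auto simp: U_def)
    then show ?thesis
    proof
      assume "z = 1" then show ?thesis using V1[of x] by simp
    next
      assume z: "z = -1"
      have "G x (-1) = - G (x - 1) 1" using G[of "x - 1"] by simp
      also have "\<dots> = V (x - 1) - V x" using V1[of "x - 1"] by simp
      finally show ?thesis using z by simp
    qed
  qed
  have "(\<Sum>k<n. G (xs k) (xs (Suc k) - xs k)) = (\<Sum>k<n. V (xs (Suc k)) - V (xs k))"
    by (rule sum.cong) (use st VG in auto)
  also have "\<dots> = V (xs n) - V (xs 0)" by (rule sum_lessThan_telescope)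
  finally show ?thesis using cl by simp
qed




locale Pset2 = Pset +
  fixes \<alpha> :: real
  assumes pos: "AE \<omega> in P. pi0 \<omega> 1 > 0 \<and> pi0 \<omega> (-1) > 0"
    and a0: "\<alpha> > 0"
    and integ: "\<forall>z\<in>U. integrable P (\<lambda>\<omega>. \<bar>ln (pi0 \<omega> z)\<bar> powr (1 + \<alpha>))"
begin

definition rr :: "real \<Rightarrow> real" where "rr c = ln c / 2"
definition gam :: "int \<Rightarrow> real \<Rightarrow> real" where
  "gam e c = (\<integral>\<omega>. ln (qq e c \<omega>) \<partial>P) - (\<integral>\<omega>. ln (pi0 \<omega> e) \<partial>P) - rr c"
definition FF :: "int \<Rightarrow> real \<Rightarrow> env \<Rightarrow> int \<Rightarrow> real" where
  "FF e c \<omega> z = (if z = e then ln (qq e c \<omega>) - ln (pi0 \<omega> e) - gam e c - rr c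
     else ln c + ln (pi0 (shift (-e) \<omega>) e) - ln (qq e c (shift (-e) \<omega>)) + gam e c - rr c)"

lemma Lp_sum:
  fixes f g :: "env \<Rightarrow> real"
  assumes p: "0 \<le> p" and mf: "f \<in> borel_measurable Omega" and mg: "g \<in> borel_measurable Omega"
    and bf: "\<And>\<omega>. \<bar>f \<omega>\<bar> \<le> K" and ig: "integrable P (\<lambda>\<omega>. \<bar>g \<omega>\<bar> powr p)"
  shows "integrable P (\<lambda>\<omega>. \<bar>f \<omega> + g \<omega>\<bar> powr p)"
proof (rule Bochner_Integration.integrable_bound)
  show "integrable P (\<lambda>\<omega>. 2 powr p * (K powr p + \<bar>g \<omega>\<bar> powr p))"
    using ig by simp
  show "(\<lambda>\<omega>. \<bar>f \<omega> + g \<omega>\<bar> powr p) \<in> borel_measurable P"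
    unfolding meas_P using mf mg by measurable
  show "AE \<omega> in P. norm (\<bar>f \<omega> + g \<omega>\<bar> powr p) \<le> norm (2 powr p * (K powr p + \<bar>g \<omega>\<bar> powr p))"
  proof (rule AE_I2)
    fix \<omega>
    have K: "0 \<le> K" using bf[of \<omega>] by linarith
    have "\<bar>f \<omega> + g \<omega>\<bar> powr p \<le> 2 powr p * (\<bar>f \<omega>\<bar> powr p + \<bar>g \<omega>\<bar> powr p)"
      by (rule powr_add_bound[OF p])
    also have "\<dots> \<le> 2 powr p * (K powr p + \<bar>g \<omega>\<bar> powr p)"
      using powr_mono2[OF p _ bf[of \<omega>]] by simp
    finally show "norm (\<bar>f \<omega> + g \<omega>\<bar> powr p) \<le> norm (2 powr p * (K powr p + \<bar>g \<omega>\<bar> powr p))"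
      using K by simp
  qed
qed

lemma int_lnpi: assumes z: "z \<in> U" shows "integrable P (\<lambda>\<omega>. ln (pi0 \<omega> z))"
proof (rule Bochner_Integration.integrable_bound)
  show "integrable P (\<lambda>\<omega>. 1 + \<bar>ln (pi0 \<omega> z)\<bar> powr (1 + \<alpha>))"
    using integ z by simp
  show "(\<lambda>\<omega>. ln (pi0 \<omega> z)) \<in> borel_measurable P" unfolding meas_P by measurable
  show "AE \<omega> in P. norm (ln (pi0 \<omega> z)) \<le> norm (1 + \<bar>ln (pi0 \<omega> z)\<bar> powr (1 + \<alpha>))"
    using abs_le_powr[of "1 + \<alpha>"] a0 by (intro AE_I2) (simp add: add_nonneg_nonneg)
qed

lemma pos_e: assumes "e \<in> U"
  shows "AE \<omega> in P. is_env \<omega> \<and> pi0 \<omega> e > 0 \<and> pi0 \<omega> (-e) > 0 \<and> pi0 (shift (-e) \<omega>) e > 0"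
proof -
  have "AE \<omega> in P. pi0 (shift (-e) \<omega>) 1 > 0 \<and> pi0 (shift (-e) \<omega>) (-1) > 0"
    by (rule AE_shift[OF pos])
  have e: "e = 1 \<or> e = -1" using assms by (auto simp: U_def)
  from pos AE_env \<open>AE \<omega> in P. pi0 (shift (-e) \<omega>) 1 > 0 \<and> pi0 (shift (-e) \<omega>) (-1) > 0\<close> show ?thesis
  proof eventually_elim
    case (elim \<omega>) then show ?case using e by auto
  qed
qed

context fixes e :: int and c :: real
  assumes eU: "e \<in> U" and c0: "0 < c" and c1: "c \<le> 1/8"
begin

lemma c0': "0 \<le> c" using c0 by simp

lemmas qqb_G = qq_bnd[OF c0' c1, where e=e]
lemmas mqq_G[measurable] = meas_qq[OF c0' c1, where e=e]

lemma lnq_bnd: "\<bar>ln (qq e c \<omega>)\<bar> \<le> 1"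
proof -
  have q: "3/4 \<le> qq e c \<omega>" "qq e c \<omega> \<le> 1" using qqb_G by auto
  have "ln (qq e c \<omega>) \<le> 0" using q by simp
  moreover have "ln (1 / qq e c \<omega>) \<le> 1 / qq e c \<omega> - 1" using q by (intro ln_le_minus_one) simp
  moreover have "1 / qq e c \<omega> \<le> 4/3" using q by (simp add: field_simps)
  moreover have "ln (1 / qq e c \<omega>) = - ln (qq e c \<omega>)" using q by (simp add: ln_div)
  ultimately show ?thesis by linarith
qed

lemma meas_FF[measurable]: "(\<lambda>\<omega>. FF e c \<omega> z) \<in> borel_measurable Omega"
proof -
  have [measurable]: "(\<lambda>\<omega>. f (shift (-e) \<omega>)) \<in> borel_measurable Omega"
    if "f \<in> borel_measurable Omega" for f :: "env \<Rightarrow> real"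
    using measurable_comp[OF meas_shift that] by (simp add: comp_def)
  show ?thesis unfolding FF_def by measurable
qed

lemma int_lnq: "integrable P (\<lambda>\<omega>. ln (qq e c \<omega>))"
  by (rule integrable_bnd[where B = 1]) (use lnq_bnd in auto)

lemma FF_Lp: assumes z: "z \<in> U" shows "integrable P (\<lambda>\<omega>. \<bar>FF e c \<omega> z\<bar> powr (1 + \<alpha>))"
proof (cases "z = e")
  case True
  have "integrable P (\<lambda>\<omega>. \<bar>(ln (qq e c \<omega>) - gam e c - rr c) + (- ln (pi0 \<omega> e))\<bar> powr (1 + \<alpha>))"
  proof (rule Lp_sum[where K = "1 + \<bar>gam e c\<bar> + \<bar>rr c\<bar>"])
    show "\<bar>ln (qq e c \<omega>) - gam e c - rr c\<bar> \<le> 1 + \<bar>gam e c\<bar> + \<bar>rr c\<bar>" for \<omega>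
      using lnq_bnd[of \<omega>] by linarith
    show "integrable P (\<lambda>\<omega>. \<bar>- ln (pi0 \<omega> e)\<bar> powr (1 + \<alpha>))" using integ eU by simp
  qed (use a0 in auto)
  then show ?thesis using True unfolding FF_def by (simp add: algebra_simps)
next
  case False
  have "integrable P (\<lambda>\<omega>. \<bar>(ln c - ln (qq e c (shift (-e) \<omega>)) + gam e c - rr c) + ln (pi0 (shift (-e) \<omega>) e)\<bar> powr (1 + \<alpha>))"
  proof (rule Lp_sum[where K = "\<bar>ln c\<bar> + 1 + \<bar>gam e c\<bar> + \<bar>rr c\<bar>"])
    show "\<bar>ln c - ln (qq e c (shift (-e) \<omega>)) + gam e c - rr c\<bar> \<le> \<bar>ln c\<bar> + 1 + \<bar>gam e c\<bar> + \<bar>rr c\<bar>" for \<omega>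
      using lnq_bnd[of "shift (-e) \<omega>"] by linarith
    show "integrable P (\<lambda>\<omega>. \<bar>ln (pi0 (shift (-e) \<omega>) e)\<bar> powr (1 + \<alpha>))"
      using integrable_shift[of "\<lambda>\<omega>. \<bar>ln (pi0 \<omega> e)\<bar> powr (1 + \<alpha>)" "-e"] integ eU by simp
    show "(\<lambda>\<omega>. ln c - ln (qq e c (shift (-e) \<omega>)) + gam e c - rr c) \<in> borel_measurable Omega"
      using measurable_comp[OF meas_shift mqq_G] by (simp add: comp_def)
    show "(\<lambda>\<omega>. ln (pi0 (shift (-e) \<omega>) e)) \<in> borel_measurable Omega"
      using measurable_comp[OF meas_shift meas_pi0] by (simp add: comp_def)
  qed (use a0 in auto)
  then show ?thesis using False unfolding FF_def by (simp add: algebra_simps)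
qed

lemma FF_mean: assumes z: "z \<in> U" shows "(\<integral>\<omega>. FF e c \<omega> z \<partial>P) = 0"
proof (cases "z = e")
  case True
  have "(\<integral>\<omega>. FF e c \<omega> z \<partial>P) = (\<integral>\<omega>. ln (qq e c \<omega>) - ln (pi0 \<omega> e) - (gam e c + rr c) \<partial>P)"
    by (rule Bochner_Integration.integral_cong) (simp_all add: FF_def True algebra_simps)
  also have "\<dots> = (\<integral>\<omega>. ln (qq e c \<omega>) \<partial>P) - (\<integral>\<omega>. ln (pi0 \<omega> e) \<partial>P) - (gam e c + rr c)"
    using int_lnq int_lnpi[OF eU] PP.prob_space by simp
  finally show ?thesis by (simp add: gam_def)
next
  case False
  have [measurable]: "(\<lambda>\<omega>. ln (qq e c \<omega>)) \<in> borel_measurable Omega" by measurable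
  have "(\<integral>\<omega>. FF e c \<omega> z \<partial>P) = (\<integral>\<omega>. ln (pi0 (shift (-e) \<omega>) e) - ln (qq e c (shift (-e) \<omega>)) + (ln c + gam e c - rr c) \<partial>P)"
    by (rule Bochner_Integration.integral_cong) (simp_all add: FF_def False algebra_simps)
  also have "\<dots> = (\<integral>\<omega>. ln (pi0 (shift (-e) \<omega>) e) \<partial>P) - (\<integral>\<omega>. ln (qq e c (shift (-e) \<omega>)) \<partial>P) + (ln c + gam e c - rr c)"
    using integrable_shift[OF int_lnq, of "-e"] integrable_shift[OF int_lnpi[OF eU], of "-e"] PP.prob_space by simp
  also have "\<dots> = (\<integral>\<omega>. ln (pi0 \<omega> e) \<partial>P) - (\<integral>\<omega>. ln (qq e c \<omega>) \<partial>P) + (ln c + gam e c - rr c)"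
    using int_shift[of "\<lambda>\<omega>. ln (pi0 \<omega> e)" "-e"] int_shift[of "\<lambda>\<omega>. ln (qq e c \<omega>)" "-e"] by simp
  finally show ?thesis by (simp add: gam_def rr_def)
qed

lemma FF_loop: "FF e c (shift x \<omega>) 1 + FF e c (shift (x + 1) \<omega>) (-1) = 0"
proof -
  have e: "e = 1 \<or> e = -1" using eU by (auto simp: U_def)
  have s1: "shift (-1) (shift (x + 1) \<omega>) = shift x \<omega>" by (simp add: shift_shift)
  have s2: "shift 1 (shift x \<omega>) = shift (x + 1) \<omega>" by (simp add: shift_shift add.commute)
  from e show ?thesis
  proof
    assume "e = 1" then show ?thesis unfolding FF_def using s1 by (simp add: rr_def)
  next
    assume "e = -1" then show ?thesis unfolding FF_def using s2 by (simp add: rr_def)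
  qed
qed

lemma FF_exp: "AE \<omega> in P. \<forall>z\<in>U. pi0 \<omega> z * exp (gam e c * real_of_int e * real_of_int z + FF e c \<omega> z + rr c) = qz e c \<omega> z"
  using pos_e[OF eU]
proof (rule AE_mp, intro AE_I2 impI ballI)
  fix \<omega> z assume H: "is_env \<omega> \<and> pi0 \<omega> e > 0 \<and> pi0 \<omega> (-e) > 0 \<and> pi0 (shift (-e) \<omega>) e > 0" and z: "z \<in> U"
  have ee: "real_of_int e * real_of_int e = 1" using U_sq[OF eU] by (metis of_int_1 of_int_mult)
  have q: "qq e c \<omega> > 0" "qq e c (shift (-e) \<omega>) > 0" using qqb_G by (auto intro: less_le_trans[of 0 "3/4"])
  show "pi0 \<omega> z * exp (gam e c * real_of_int e * real_of_int z + FF e c \<omega> z + rr c) = qz e c \<omega> z"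
  proof (cases "z = e")
    case True
    have "gam e c * real_of_int e * real_of_int z + FF e c \<omega> z + rr c = ln (qq e c \<omega>) - ln (pi0 \<omega> e)"
      using True ee unfolding FF_def by (simp add: mult.assoc)
    then show ?thesis using True H q by (simp add: exp_diff qz_def)
  next
    case False
    then have zz: "z = -e" using z eU by (auto simp: U_def)
    have "gam e c * real_of_int e * real_of_int z + FF e c \<omega> z + rr c
        = ln c + ln (pi0 (shift (-e) \<omega>) e) - ln (qq e c (shift (-e) \<omega>))"
      using zz ee U_ne[OF eU] unfolding FF_def by (simp add: mult.assoc)
    then have "pi0 \<omega> z * exp (gam e c * real_of_int e * real_of_int z + FF e c \<omega> z + rr c)
        = pi0 \<omega> (-e) * (c * pi0 (shift (-e) \<omega>) e / qq e c (shift (-e) \<omega>))"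
      using zz H q c0 by (simp add: exp_diff exp_add)
    also have "\<dots> = c * rho e (shift (-e) \<omega>) / qq e c (shift (-e) \<omega>)"
    proof -
      have env: "is_env (shift (-e) \<omega>)" using H is_env_shift by blast
      have ss: "shift e (shift (-e) \<omega>) = \<omega>" by (simp add: shift_shift)
      have b: "0 \<le> pi0 (shift (-e) \<omega>) e" "pi0 (shift (-e) \<omega>) e \<le> 1" "0 \<le> pi0 \<omega> (-e)" "pi0 \<omega> (-e) \<le> 1"
        using pi0_env[OF env, of e] pi0_env[of \<omega> "-e"] H by auto
      then have "pi0 (shift (-e) \<omega>) e * pi0 \<omega> (-e) \<le> 1" by (simp add: mult_le_one)
      then have "rho e (shift (-e) \<omega>) = pi0 (shift (-e) \<omega>) e * pi0 \<omega> (-e)"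
        unfolding rho_def ss using b by simp
      then show ?thesis by simp
    qed
    also have "\<dots> = 1 - qq e c \<omega>" using qq_fix[OF c0' c1, where e=e and \<omega>=\<omega>] by simp
    finally show ?thesis using zz U_ne[OF eU] by (simp add: qz_def)
  qed
qed

lemma qz_pos_AE: "AE \<omega> in P. \<forall>z\<in>U. qz e c \<omega> z > 0"
  using FF_exp pos_e[OF eU]
proof eventually_elim
  case (elim \<omega>)
  show ?case
  proof
    fix z assume z: "z \<in> U"
    then have "pi0 \<omega> z > 0" using elim eU by (auto simp: U_def)
    then show "qz e c \<omega> z > 0" using elim(1) z by (metis exp_gt_zero mult_pos_pos)
  qed
qed

lemma construct:
  "\<exists>\<mu>. \<mu> \<in> A_xi (real_of_int e / Zc e c) \<inter> M1s_ac P \<and>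
        (\<exists>\<theta> F r. F \<in> classK P \<and>
          (\<forall>z \<in> U. \<forall>A \<in> sets Omega. emeasure \<mu> (A \<times> {z}) =
             (\<integral>\<^sup>+ \<omega>. ennreal (pi0 \<omega> z * exp (\<theta> * real_of_int z + F \<omega> z + r)) * indicator A \<omega>
                \<partial>(marg1 \<mu>))))"
proof (intro exI conjI)
  show "mu e c \<in> A_xi (real_of_int e / Zc e c) \<inter> M1s_ac P"
  proof
    show "mu e c \<in> A_xi (real_of_int e / Zc e c)"
      unfolding A_xi_def using mu_M1[OF eU c0' c1] mu_xi[OF eU c0' c1] by simp
    show "mu e c \<in> M1s_ac P"
      unfolding M1s_ac_def
    proof (intro CollectI conjI)
      show "mu e c \<in> M1" by (rule mu_M1[OF eU c0' c1])
      show "marg1 (mu e c) = marg2 (mu e c)"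
        using marg1_mu[OF eU c0' c1] marg2_mu[OF eU c0' c1] by simp
      show "absolutely_continuous P (marg1 (mu e c))"
        unfolding marg1_mu[OF eU c0' c1]
        by (rule absolutely_continuousI_density) (use meas_hn[OF eU c0' c1] in \<open>simp add: meas_P\<close>)
      show "\<exists>g :: int \<Rightarrow> env \<Rightarrow> real. \<forall>z \<in> U.
          g z \<in> borel_measurable Omega \<and> (AE \<omega> in P. g z \<omega> > 0) \<and>
          (\<forall>A \<in> sets Omega. emeasure (mu e c) (A \<times> {z}) =
                 (\<integral>\<^sup>+ \<omega>. ennreal (g z \<omega>) * indicator A \<omega> \<partial>(marg1 (mu e c))))"
      proof (intro exI[of _ "\<lambda>z \<omega>. qz e c \<omega> z"] ballI conjI)
        fix z assume z: "z \<in> U"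
        show "(\<lambda>\<omega>. qz e c \<omega> z) \<in> borel_measurable Omega" unfolding qz_def by measurable
        show "AE \<omega> in P. qz e c \<omega> z > 0" using qz_pos_AE z by auto
        fix A assume A: "A \<in> sets Omega"
        show "emeasure (mu e c) (A \<times> {z}) = (\<integral>\<^sup>+ \<omega>. ennreal (qz e c \<omega> z) * indicator A \<omega> \<partial>(marg1 (mu e c)))"
          by (rule mu_density[OF eU c0' c1 A z]) (auto simp: qz_def)
      qed
    qed
  qed
  show "FF e c \<in> classK P"
    unfolding classK_def
  proof (intro CollectI conjI)
    show "\<forall>z\<in>U. (\<lambda>\<omega>. FF e c \<omega> z) \<in> borel_measurable Omega" by simp
    show "\<exists>\<alpha>>0. \<forall>z\<in>U. integrable P (\<lambda>\<omega>. \<bar>FF e c \<omega> z\<bar> powr (1 + \<alpha>))"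
      using a0 FF_Lp by blast
    show "\<forall>z\<in>U. (\<integral>\<omega>. FF e c \<omega> z \<partial>P) = 0" using FF_mean by blast
    show "AE \<omega> in P. \<forall>(n::nat) (xs :: nat \<Rightarrow> int). xs 0 = xs n \<and> (\<forall>k < n. xs (Suc k) - xs k \<in> U)
          \<longrightarrow> (\<Sum>k<n. FF e c (shift (xs k) \<omega>) (xs (Suc k) - xs k)) = 0"
    proof (intro AE_I2 allI impI)
      fix \<omega> n and xs :: "nat \<Rightarrow> int"
      assume "xs 0 = xs n \<and> (\<forall>k < n. xs (Suc k) - xs k \<in> U)"
      then show "(\<Sum>k<n. FF e c (shift (xs k) \<omega>) (xs (Suc k) - xs k)) = 0"
        using loop_zero[of "\<lambda>x z. FF e c (shift x \<omega>) z" xs n] FF_loop by blast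
    qed
  qed
  show "\<forall>z \<in> U. \<forall>A \<in> sets Omega. emeasure (mu e c) (A \<times> {z}) =
             (\<integral>\<^sup>+ \<omega>. ennreal (pi0 \<omega> z * exp (gam e c * real_of_int e * real_of_int z + FF e c \<omega> z + rr c)) * indicator A \<omega>
                \<partial>(marg1 (mu e c)))"
  proof (intro ballI)
    fix z A assume z: "z \<in> U" and A: "A \<in> sets Omega"
    show "emeasure (mu e c) (A \<times> {z}) =
             (\<integral>\<^sup>+ \<omega>. ennreal (pi0 \<omega> z * exp (gam e c * real_of_int e * real_of_int z + FF e c \<omega> z + rr c)) * indicator A \<omega>
                \<partial>(marg1 (mu e c)))"
    proof (rule mu_density[OF eU c0' c1 A z])
      show "(\<lambda>\<omega>. pi0 \<omega> z * exp (gam e c * real_of_int e * real_of_int z + FF e c \<omega> z + rr c)) \<in> borel_measurable Omega"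
        by measurable
      show "AE \<omega> in P. pi0 \<omega> z * exp (gam e c * real_of_int e * real_of_int z + FF e c \<omega> z + rr c) = qz e c \<omega> z"
        using FF_exp z by auto
    qed
  qed
qed

end
end



context Pset2 begin

lemma Zc_cont: assumes eU: "e \<in> U" shows "continuous_on {0..1/8} (\<lambda>c. Zc e c)"
proof (rule continuous_on_sequentiallyI)
  fix u a assume u: "\<forall>n. u n \<in> {0..1/8::real}" and a: "a \<in> {0..1/8}" and ua: "u \<longlonglongrightarrow> a"
  show "(\<lambda>n. Zc e (u n)) \<longlonglongrightarrow> Zc e a"
    unfolding Zc_def
  proof (rule integral_dominated_convergence[where w = "\<lambda>_. 2"])
    show "hh e a \<in> borel_measurable P" using meas_hh[of a e] a by (simp add: meas_P)
    show "hh e (u n) \<in> borel_measurable P" for n using meas_hh[of "u n" e] u by (simp add: meas_P)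
    show "integrable P (\<lambda>_. 2::real)" by simp
    show "AE x in P. (\<lambda>n. hh e (u n) x) \<longlonglongrightarrow> hh e a x"
    proof (rule AE_I2)
      fix x
      have "((\<lambda>c. hh e c x) \<circ> u) \<longlonglongrightarrow> hh e a x"
        using hh_cont[of e x] u a ua unfolding continuous_on_sequentially by blast
      then show "(\<lambda>n. hh e (u n) x) \<longlonglongrightarrow> hh e a x" by (simp add: comp_def)
    qed
    show "AE x in P. norm (hh e (u n) x) \<le> 2" for n
    proof (rule AE_I2)
      fix x show "norm (hh e (u n) x) \<le> 2" using hh_bnd[of "u n" e x] u by auto
    qed
  qed
qed

lemma Zc_zero: "Zc e 0 = 1"
  unfolding Zc_def hh_zero using PP.prob_space by simp

lemma Zc_gt: assumes eU: "e \<in> U" shows "1 < Zc e (1/8)"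
proof -
  let ?c = "1/8::real"
  let ?f = "\<lambda>\<omega>. rho e (shift (-e) \<omega>)"
  have mf: "?f \<in> borel_measurable Omega"
    using measurable_comp[OF meas_shift meas_rho] by (simp add: comp_def)
  have if': "integrable P ?f" by (rule integrable_bnd[where B=1, OF mf]) (use rho_bnd in auto)
  have fpos: "AE \<omega> in P. ?f \<omega> > 0"
    using pos_e[OF eU]
  proof (rule AE_mp, intro AE_I2 impI)
    fix \<omega> assume H: "is_env \<omega> \<and> pi0 \<omega> e > 0 \<and> pi0 \<omega> (-e) > 0 \<and> pi0 (shift (-e) \<omega>) e > 0"
    have ss: "shift e (shift (-e) \<omega>) = \<omega>" by (simp add: shift_shift)
    have "pi0 (shift (-e) \<omega>) e * pi0 \<omega> (-e) > 0" using H by simp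
    then show "?f \<omega> > 0" unfolding rho_def ss by simp
  qed
  have "integral\<^sup>L P ?f \<noteq> 0"
  proof
    assume "integral\<^sup>L P ?f = 0"
    then have "AE \<omega> in P. ?f \<omega> = 0"
      using integral_nonneg_eq_0_iff_AE[OF if'] rho_bnd by auto
    with fpos have "AE \<omega> in P. False" by eventually_elim simp
    then show False using PP.AE_False by simp
  qed
  moreover have "integral\<^sup>L P ?f \<ge> 0" using rho_bnd by (simp add: integral_nonneg)
  ultimately have ip: "integral\<^sup>L P ?f > 0" by simp
  have "(\<integral>\<omega>. 1 + ?c * ?f \<omega> \<partial>P) \<le> Zc e ?c"
    unfolding Zc_def
    by (rule integral_mono[OF _ int_hh[OF eU]]) (use if' hh_lower[of ?c e] in auto)
  moreover have "(\<integral>\<omega>. 1 + ?c * ?f \<omega> \<partial>P) = 1 + ?c * integral\<^sup>L P ?f"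
    using if' PP.prob_space by simp
  ultimately show ?thesis using ip by simp
qed

lemma main_dir:
  assumes eU: "e \<in> U"
  shows "\<exists>\<beta>. 0 \<le> \<beta> \<and> \<beta> < 1 \<and> (\<forall>t. \<beta> < t \<and> t < 1 \<longrightarrow>
     (\<exists>c. 0 < c \<and> c \<le> 1/8 \<and> 1 / Zc e c = t))"
proof (rule exI[of _ "1 / Zc e (1/8)"], intro conjI allI impI)
  let ?g = "\<lambda>c. - (1 / Zc e c)"
  have Z1: "1 \<le> Zc e c" if "c \<in> {0..1/8}" for c using Zc_bnd[OF eU, of c] that by auto
  have cont: "continuous_on {0..1/8} ?g"
    using Z1 by (intro continuous_intros Zc_cont[OF eU]) fastforce
  have gt: "1 < Zc e (1/8)" by (rule Zc_gt[OF eU])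
  show "0 \<le> 1 / Zc e (1/8)" using gt by simp
  show "1 / Zc e (1/8) < 1" using gt by simp
  fix t assume t: "1 / Zc e (1/8) < t \<and> t < 1"
  have "\<exists>x\<ge>0. x \<le> 1/8 \<and> ?g x = - t"
    by (rule IVT'[OF _ _ _ cont]) (use t Zc_zero in auto)
  then obtain x where x: "0 \<le> x" "x \<le> 1/8" "1 / Zc e x = t" by auto
  have "x \<noteq> 0" using x t Zc_zero by auto
  then show "\<exists>c. 0 < c \<and> c \<le> 1/8 \<and> 1 / Zc e c = t" using x by (intro exI[of _ x]) auto
qed

end

theorem theorem1p7:
  fixes P :: "env measure"
  assumes "stationary_ergodic P"
    and "AE \<omega> in P. pi0 \<omega> 1 > 0 \<and> pi0 \<omega> (-1) > 0"
    and "\<exists>\<alpha> > 0. \<forall>z \<in> U. integrable P (\<lambda>\<omega>. \<bar>ln (pi0 \<omega> z)\<bar> powr (1 + \<alpha>))"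
  shows "\<exists>\<xi>c \<xi>c'. -1 < \<xi>c' \<and> \<xi>c' \<le> 0 \<and> 0 \<le> \<xi>c \<and> \<xi>c < 1 \<and>
    (\<forall>\<xi>. \<xi> \<in> {-1<..<\<xi>c'} \<union> {\<xi>c<..<1} \<longrightarrow>
      (\<exists>\<mu>. \<mu> \<in> A_xi \<xi> \<inter> M1s_ac P \<and>
        (\<exists>\<theta> F r. F \<in> classK P \<and>
          (\<forall>z \<in> U. \<forall>A \<in> sets Omega. emeasure \<mu> (A \<times> {z}) =
             (\<integral>\<^sup>+ \<omega>. ennreal (pi0 \<omega> z * exp (\<theta> * real_of_int z + F \<omega> z + r)) * indicator A \<omega>
                \<partial>(marg1 \<mu>))))))"
proof -
  obtain \<alpha> where a: "\<alpha> > 0" "\<forall>z \<in> U. integrable P (\<lambda>\<omega>. \<bar>ln (pi0 \<omega> z)\<bar> powr (1 + \<alpha>))"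
    using assms(3) by blast
  interpret Pset2 P \<alpha>
    by unfold_locales (use assms(1,2) a in auto)
  have U1: "(1::int) \<in> U" and Um: "(-1::int) \<in> U" by (auto simp: U_def)
  obtain \<beta>1 where b1: "0 \<le> \<beta>1" "\<beta>1 < 1"
    and h1: "\<And>t. \<beta>1 < t \<Longrightarrow> t < 1 \<Longrightarrow> \<exists>c. 0 < c \<and> c \<le> 1/8 \<and> 1 / Zc 1 c = t"
    using main_dir[OF U1] by blast
  obtain \<beta>2 where b2: "0 \<le> \<beta>2" "\<beta>2 < 1"
    and h2: "\<And>t. \<beta>2 < t \<Longrightarrow> t < 1 \<Longrightarrow> \<exists>c. 0 < c \<and> c \<le> 1/8 \<and> 1 / Zc (-1) c = t"
    using main_dir[OF Um] by blast
  show ?thesis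
  proof (rule exI[of _ \<beta>1], rule exI[of _ "-\<beta>2"], intro conjI allI impI)
    show "-1 < -\<beta>2" using b2 by simp
    show "-\<beta>2 \<le> 0" using b2 by simp
    show "0 \<le> \<beta>1" using b1 by simp
    show "\<beta>1 < 1" using b1 by simp
    fix \<xi> :: real assume "\<xi> \<in> {-1<..<-\<beta>2} \<union> {\<beta>1<..<1}"
    then consider "-1 < \<xi>" "\<xi> < -\<beta>2" | "\<beta>1 < \<xi>" "\<xi> < 1" by auto
    then show "\<exists>\<mu>. \<mu> \<in> A_xi \<xi> \<inter> M1s_ac P \<and>
        (\<exists>\<theta> F r. F \<in> classK P \<and>
          (\<forall>z \<in> U. \<forall>A \<in> sets Omega. emeasure \<mu> (A \<times> {z}) =
             (\<integral>\<^sup>+ \<omega>. ennreal (pi0 \<omega> z * exp (\<theta> * real_of_int z + F \<omega> z + r)) * indicator A \<omega>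
                \<partial>(marg1 \<mu>))))"
    proof cases
      case 1
      then obtain c where c: "0 < c" "c \<le> 1/8" "1 / Zc (-1) c = -\<xi>" using h2[of "-\<xi>"] by auto
      have "real_of_int (-1) / Zc (-1) c = \<xi>" using c(3) by (simp add: minus_divide_left)
      then show ?thesis using construct[OF Um c(1,2)] by simp
    next
      case 2
      then obtain c where c: "0 < c" "c \<le> 1/8" "1 / Zc 1 c = \<xi>" using h1[of \<xi>] by auto
      have "real_of_int 1 / Zc 1 c = \<xi>" using c(3) by simp
      then show ?thesis using construct[OF U1 c(1,2)] by simp
    qed
  qed
qed


end
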